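(* Let $U$ be an infinite-dimensional vector space over a (not necessarily commutative) field $K$ and let $R:=\mathrm{End}_K(U)$. Then the projective line $\mathbb{P}(R)$ is connected and its diameter (with respect to the distant relation) is exactly $3$.
   Context: For a ring $R$ with $1$, a pair $(a,b)\in R^2$ is admissible if it is the first row of some invertible $2\times2$ matrix over $R$. The projective line $\mathbb{P}(R)$ is the set of all cyclic submodules $R(a,b)$ of the left $R$-module $R^2$ with $(a,b)$ admissible. Two points $R(a,b)$, $R(c,d)$ are distant iff $\begin{pmatrix}a&b\\c&d\end{pmatrix}$ is invertible. The distant graph has vertex set $\mathbb{P}(R)$ and edges the pairs of distant points; $\mathbb{P}(R)$ is connected if this graph is connected, the distance between two points is the least number of edges of a path joining them, and the diameter is the supremum of distances between points of $\mathbb{P}(R)$. *)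

theory Defs
  imports "HOL-Algebra.Ring" "HOL-Library.Extended_Nat"
begin

definition left_vector_space :: "('k::division_ring \<Rightarrow> 'u::ab_group_add \<Rightarrow> 'u) \<Rightarrow> bool" where
  "left_vector_space sm \<longleftrightarrow>
     (\<forall>a x y. sm a (x + y) = sm a x + sm a y) \<and>
     (\<forall>a b x. sm (a + b) x = sm a x + sm b x) \<and>
     (\<forall>a b x. sm (a * b) x = sm a (sm b x)) \<and>
     (\<forall>x. sm 1 x = x)"

definition vs_span :: "('k::division_ring \<Rightarrow> 'u::ab_group_add \<Rightarrow> 'u) \<Rightarrow> 'u set \<Rightarrow> 'u set" where
  "vs_span sm S = {x. \<exists>T c. finite T \<and> T \<subseteq> S \<and> x = (\<Sum>v\<in>T. sm (c v) v)}"

definition finite_dimensional_vs :: "('k::division_ring \<Rightarrow> 'u::ab_group_add \<Rightarrow> 'u) \<Rightarrow> bool" where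
  "finite_dimensional_vs sm \<longleftrightarrow> (\<exists>S. finite S \<and> vs_span sm S = UNIV)"

definition vs_linear :: "('k::division_ring \<Rightarrow> 'u::ab_group_add \<Rightarrow> 'u) \<Rightarrow> ('u \<Rightarrow> 'u) \<Rightarrow> bool" where
  "vs_linear sm f \<longleftrightarrow> (\<forall>x y. f (x + y) = f x + f y) \<and> (\<forall>a x. f (sm a x) = sm a (f x))"

text \<open>The endomorphism ring End_K(U), with multiplication being composition
  (maps written on the left: (f g)(x) = f (g x)).\<close>
definition End_ring :: "('k::division_ring \<Rightarrow> 'u::ab_group_add \<Rightarrow> 'u) \<Rightarrow> ('u \<Rightarrow> 'u) ring" where
  "End_ring sm = \<lparr>carrier = {f. vs_linear sm f}, mult = (\<lambda>f g. f \<circ> g), one = id,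
                   zero = (\<lambda>_. 0), add = (\<lambda>f g x. f x + g x)\<rparr>"

definition mat2_invertible :: "('r, 'm) ring_scheme \<Rightarrow> 'r \<Rightarrow> 'r \<Rightarrow> 'r \<Rightarrow> 'r \<Rightarrow> bool" where
  "mat2_invertible R a b c d \<longleftrightarrow>
     a \<in> carrier R \<and> b \<in> carrier R \<and> c \<in> carrier R \<and> d \<in> carrier R \<and>
     (\<exists>e\<in>carrier R. \<exists>f\<in>carrier R. \<exists>g\<in>carrier R. \<exists>h\<in>carrier R.
        a \<otimes>\<^bsub>R\<^esub> e \<oplus>\<^bsub>R\<^esub> b \<otimes>\<^bsub>R\<^esub> g = \<one>\<^bsub>R\<^esub> \<and>
        a \<otimes>\<^bsub>R\<^esub> f \<oplus>\<^bsub>R\<^esub> b \<otimes>\<^bsub>R\<^esub> h = \<zero>\<^bsub>R\<^esub> \<and>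
        c \<otimes>\<^bsub>R\<^esub> e \<oplus>\<^bsub>R\<^esub> d \<otimes>\<^bsub>R\<^esub> g = \<zero>\<^bsub>R\<^esub> \<and>
        c \<otimes>\<^bsub>R\<^esub> f \<oplus>\<^bsub>R\<^esub> d \<otimes>\<^bsub>R\<^esub> h = \<one>\<^bsub>R\<^esub> \<and>
        e \<otimes>\<^bsub>R\<^esub> a \<oplus>\<^bsub>R\<^esub> f \<otimes>\<^bsub>R\<^esub> c = \<one>\<^bsub>R\<^esub> \<and>
        e \<otimes>\<^bsub>R\<^esub> b \<oplus>\<^bsub>R\<^esub> f \<otimes>\<^bsub>R\<^esub> d = \<zero>\<^bsub>R\<^esub> \<and>
        g \<otimes>\<^bsub>R\<^esub> a \<oplus>\<^bsub>R\<^esub> h \<otimes>\<^bsub>R\<^esub> c = \<zero>\<^bsub>R\<^esub> \<and>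
        g \<otimes>\<^bsub>R\<^esub> b \<oplus>\<^bsub>R\<^esub> h \<otimes>\<^bsub>R\<^esub> d = \<one>\<^bsub>R\<^esub>)"

definition admissible :: "('r, 'm) ring_scheme \<Rightarrow> 'r \<Rightarrow> 'r \<Rightarrow> bool" where
  "admissible R a b \<longleftrightarrow> (\<exists>c\<in>carrier R. \<exists>d\<in>carrier R. mat2_invertible R a b c d)"

definition cyc :: "('r, 'm) ring_scheme \<Rightarrow> 'r \<Rightarrow> 'r \<Rightarrow> ('r \<times> 'r) set" where
  "cyc R a b = {(r \<otimes>\<^bsub>R\<^esub> a, r \<otimes>\<^bsub>R\<^esub> b) | r. r \<in> carrier R}"

definition proj_line :: "('r, 'm) ring_scheme \<Rightarrow> ('r \<times> 'r) set set" where
  "proj_line R = {cyc R a b | a b. admissible R a b}"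

definition distant :: "('r, 'm) ring_scheme \<Rightarrow> ('r \<times> 'r) set \<Rightarrow> ('r \<times> 'r) set \<Rightarrow> bool" where
  "distant R p q \<longleftrightarrow>
     (\<exists>a b c d. admissible R a b \<and> admissible R c d \<and>
        p = cyc R a b \<and> q = cyc R c d \<and> mat2_invertible R a b c d)"

definition dpath :: "('r, 'm) ring_scheme \<Rightarrow> ('r \<times> 'r) set \<Rightarrow> ('r \<times> 'r) set \<Rightarrow> nat \<Rightarrow> bool" where
  "dpath R p q n \<longleftrightarrow>
     (\<exists>xs. length xs = Suc n \<and> xs ! 0 = p \<and> xs ! n = q \<and> set xs \<subseteq> proj_line R \<and>
        (\<forall>i<n. distant R (xs ! i) (xs ! Suc i)))"

definition proj_connected :: "('r, 'm) ring_scheme \<Rightarrow> bool" where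
  "proj_connected R \<longleftrightarrow> (\<forall>p\<in>proj_line R. \<forall>q\<in>proj_line R. \<exists>n. dpath R p q n)"

definition proj_distance :: "('r, 'm) ring_scheme \<Rightarrow> ('r \<times> 'r) set \<Rightarrow> ('r \<times> 'r) set \<Rightarrow> enat" where
  "proj_distance R p q = (if \<exists>n. dpath R p q n then enat (LEAST n. dpath R p q n) else \<infinity>)"

definition proj_diameter :: "('r, 'm) ring_scheme \<Rightarrow> enat" where
  "proj_diameter R = (SUP p\<in>proj_line R. SUP q\<in>proj_line R. proj_distance R p q)"

end

theory Submission imports Defs "HOL-Library.Product_Plus" begin


definition Msum :: "'v::ab_group_add set \<Rightarrow> 'v set \<Rightarrow> 'v set" where
  "Msum A B = {a + b | a b. a \<in> A \<and> b \<in> B}"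

lemma Msum_comm: "Msum A B = Msum B A"
  unfolding Msum_def by (auto) (metis add.commute)+

lemma MsumI: "a \<in> A \<Longrightarrow> b \<in> B \<Longrightarrow> a + b \<in> Msum A B"
  unfolding Msum_def by blast

lemma MsumE: "x \<in> Msum A B \<Longrightarrow> (\<And>a b. a \<in> A \<Longrightarrow> b \<in> B \<Longrightarrow> x = a + b \<Longrightarrow> P) \<Longrightarrow> P"
  unfolding Msum_def by blast

definition lsub :: "('k::division_ring \<Rightarrow> 'v::ab_group_add \<Rightarrow> 'v) \<Rightarrow> 'v set \<Rightarrow> bool" where
  "lsub sm A \<longleftrightarrow> 0 \<in> A \<and> (\<forall>x\<in>A. \<forall>y\<in>A. x + y \<in> A) \<and> (\<forall>a. \<forall>x\<in>A. sm a x \<in> A)"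

definition lcompl :: "('k::division_ring \<Rightarrow> 'v::ab_group_add \<Rightarrow> 'v) \<Rightarrow> 'v set \<Rightarrow> 'v set \<Rightarrow> bool" where
  "lcompl sm A B \<longleftrightarrow> lsub sm A \<and> lsub sm B \<and> A \<inter> B = {0} \<and> Msum A B = UNIV"

definition rsub :: "('k::division_ring \<Rightarrow> 'v::ab_group_add \<Rightarrow> 'v) \<Rightarrow> ('v \<times> 'v) set \<Rightarrow> bool" where
  "rsub sm G \<longleftrightarrow> (0,0) \<in> G \<and> (\<forall>x y x' y'. (x,y) \<in> G \<longrightarrow> (x',y') \<in> G \<longrightarrow> (x+x',y+y') \<in> G)
     \<and> (\<forall>a x y. (x,y) \<in> G \<longrightarrow> (sm a x, sm a y) \<in> G)"

definition llin :: "('k::division_ring \<Rightarrow> 'v::ab_group_add \<Rightarrow> 'v) \<Rightarrow> ('k \<Rightarrow> 'w::ab_group_add \<Rightarrow> 'w) \<Rightarrow> ('v \<Rightarrow> 'w) \<Rightarrow> bool" where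
  "llin sm sm' f \<longleftrightarrow> (\<forall>x y. f (x + y) = f x + f y) \<and> (\<forall>a x. f (sm a x) = sm' a (f x))"

definition psm :: "('k::division_ring \<Rightarrow> 'v::ab_group_add \<Rightarrow> 'v) \<Rightarrow> 'k \<Rightarrow> 'v \<times> 'v \<Rightarrow> 'v \<times> 'v" where
  "psm sm a z = (sm a (fst z), sm a (snd z))"

locale lvs =
  fixes sm :: "'k::division_ring \<Rightarrow> 'v::ab_group_add \<Rightarrow> 'v"
  assumes sm_add: "sm a (x + y) = sm a x + sm a y"
    and sm_add2: "sm (a + b) x = sm a x + sm b x"
    and sm_mult: "sm (a * b) x = sm a (sm b x)"
    and sm_one[simp]: "sm 1 x = x"
begin

lemma sm_zero[simp]: "sm a 0 = 0"
  using sm_add[of a 0 0] by simp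

lemma sm_zero2[simp]: "sm 0 x = 0"
  using sm_add2[of 0 0 x] by simp

lemma sm_neg: "sm a (- x) = - sm a x"
proof -
  have "sm a x + sm a (-x) = 0" using sm_add[of a x "-x"] by simp
  thus ?thesis by (metis minus_unique)
qed

lemma sm_neg2: "sm (- a) x = - sm a x"
proof -
  have "sm a x + sm (-a) x = 0" using sm_add2[of a "-a" x] by simp
  thus ?thesis by (metis minus_unique)
qed

lemma sm_diff: "sm a (x - y) = sm a x - sm a y"
  using sm_add[of a x "-y"] sm_neg by simp

lemma sm_inv: "a \<noteq> 0 \<Longrightarrow> sm (inverse a) (sm a x) = x"
  using sm_mult[of "inverse a" a x] by simp

lemma sm_eq0: "sm a x = 0 \<Longrightarrow> a \<noteq> 0 \<Longrightarrow> x = 0"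
  using sm_inv[of a x] by simp

lemma lsubD:
  assumes "lsub sm A"
  shows "0 \<in> A" "x \<in> A \<Longrightarrow> y \<in> A \<Longrightarrow> x + y \<in> A" "x \<in> A \<Longrightarrow> sm a x \<in> A"
    "x \<in> A \<Longrightarrow> - x \<in> A" "x \<in> A \<Longrightarrow> y \<in> A \<Longrightarrow> x - y \<in> A"
proof -
  show "0 \<in> A" "x \<in> A \<Longrightarrow> y \<in> A \<Longrightarrow> x + y \<in> A" "x \<in> A \<Longrightarrow> sm a x \<in> A"
    using assms unfolding lsub_def by auto
  show neg: "x \<in> A \<Longrightarrow> - x \<in> A" for x
    using assms unfolding lsub_def by (metis sm_neg2 sm_one)
  show "x \<in> A \<Longrightarrow> y \<in> A \<Longrightarrow> x - y \<in> A"
    using assms neg[of y] unfolding lsub_def by (metis diff_conv_add_uminus)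
qed

lemma lsub_UNIV: "lsub sm UNIV" by (simp add: lsub_def)

lemma lsub_zero: "lsub sm {0}" by (simp add: lsub_def)

lemma lsub_Int: "lsub sm A \<Longrightarrow> lsub sm B \<Longrightarrow> lsub sm (A \<inter> B)"
  by (simp add: lsub_def)

lemma lsub_Msum: assumes A: "lsub sm A" and B: "lsub sm B" shows "lsub sm (Msum A B)"
  unfolding lsub_def
proof (intro conjI ballI allI)
  show "0 \<in> Msum A B" using MsumI[OF lsubD(1)[OF A] lsubD(1)[OF B]] by simp
next
  fix x y assume "x \<in> Msum A B" "y \<in> Msum A B"
  then obtain a b a' b' where "a \<in> A" "b \<in> B" "x = a + b" "a' \<in> A" "b' \<in> B" "y = a' + b'"
    by (metis MsumE)
  moreover have "x + y = (a + a') + (b + b')" using calculation by (simp add: algebra_simps)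
  ultimately show "x + y \<in> Msum A B" using lsubD(2)[OF A] lsubD(2)[OF B] MsumI by metis
next
  fix k x assume "x \<in> Msum A B"
  then obtain a b where "a \<in> A" "b \<in> B" "x = a + b" by (metis MsumE)
  thus "sm k x \<in> Msum A B" using lsubD(3)[OF A] lsubD(3)[OF B] MsumI by (metis sm_add)
qed

lemma lsub_line: "lsub sm (range (\<lambda>k. sm k x))"
  unfolding lsub_def
  by (auto simp: sm_add2[symmetric] sm_mult[symmetric]) (metis sm_zero2 rangeI)

lemma lcompl_sym: "lcompl sm A B \<Longrightarrow> lcompl sm B A"
  unfolding lcompl_def by (auto simp: Msum_comm)

lemma lcompl_decomp:
  assumes "lcompl sm A B"
  obtains a b where "a \<in> A" "b \<in> B" "x = a + b"
  using assms unfolding lcompl_def by (metis MsumE UNIV_I)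

lemma lcompl_uniq:
  assumes "lcompl sm A B" "a \<in> A" "b \<in> B" "a' \<in> A" "b' \<in> B" "a + b = a' + b'"
  shows "a = a'" "b = b'"
proof -
  have sA: "lsub sm A" and sB: "lsub sm B" and I: "A \<inter> B = {0}" using assms(1) by (auto simp: lcompl_def)
  have "a - a' = b' - b" using assms(6) by (simp add: algebra_simps)
  moreover have "a - a' \<in> A" using lsubD(5)[OF sA] assms by auto
  moreover have "b' - b \<in> B" using lsubD(5)[OF sB] assms by auto
  ultimately have "b' - b \<in> A \<inter> B" by simp
  hence "b' - b = 0" using I by blast
  moreover have "a - a' = 0" using \<open>a - a' = b' - b\<close> calculation by simp
  ultimately show "a = a'" "b = b'" by auto
qed

lemma complement_exists:
  assumes sA: "lsub sm A" and sB: "lsub sm B" and AB: "A \<subseteq> B"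
  shows "\<exists>C. lsub sm C \<and> C \<subseteq> B \<and> A \<inter> C = {0} \<and> Msum A C = B"
proof -
  let ?F = "{C. lsub sm C \<and> C \<subseteq> B \<and> A \<inter> C = {0}}"
  have "\<exists>M\<in>?F. \<forall>X\<in>?F. M \<subseteq> X \<longrightarrow> X = M"
  proof (rule subset_Zorn_nonempty)
    show "?F \<noteq> {}" using lsub_zero lsubD(1)[OF sA] lsubD(1)[OF sB] by auto
    fix \<C> assume ne: "\<C> \<noteq> {}" and ch: "subset.chain ?F \<C>"
    have chs: "\<C> \<subseteq> ?F" and tot: "\<forall>X\<in>\<C>. \<forall>Y\<in>\<C>. X \<subseteq> Y \<or> Y \<subseteq> X"
      using ch by (auto simp: subset_chain_def)
    have "lsub sm (\<Union>\<C>)"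
      unfolding lsub_def
    proof (intro conjI ballI allI)
      show "0 \<in> \<Union>\<C>" using ne chs lsubD(1) by blast
    next
      fix x y assume "x \<in> \<Union>\<C>" "y \<in> \<Union>\<C>"
      then obtain X Y where XY: "X \<in> \<C>" "Y \<in> \<C>" "x \<in> X" "y \<in> Y" by blast
      with tot have "X \<subseteq> Y \<or> Y \<subseteq> X" by blast
      thus "x + y \<in> \<Union>\<C>" using XY chs lsubD(2) by blast
    next
      fix a x assume "x \<in> \<Union>\<C>"
      thus "sm a x \<in> \<Union>\<C>" using chs lsubD(3) by blast
    qed
    moreover have "\<Union>\<C> \<subseteq> B" using chs by blast
    moreover have "A \<inter> \<Union>\<C> = {0}" using chs ne lsubD(1)[OF sA] by blast
    ultimately show "\<Union>\<C> \<in> ?F" by blast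
  qed
  then obtain C where CF: "C \<in> ?F" and max0: "\<forall>X\<in>?F. C \<subseteq> X \<longrightarrow> X = C" by (elim bexE)
  have C: "lsub sm C" "C \<subseteq> B" "A \<inter> C = {0}" using CF by auto
  have max: "\<And>X. X \<in> ?F \<Longrightarrow> C \<subseteq> X \<Longrightarrow> X = C" using max0 by auto
  have "Msum A C = B"
  proof
    show "Msum A C \<subseteq> B"
    proof (rule subsetI)
      fix y assume "y \<in> Msum A C"
      then obtain a c where "a \<in> A" "c \<in> C" "y = a + c" by (rule MsumE)
      thus "y \<in> B" using lsubD(2)[OF sB] AB C(2) by blast
    qed
    show "B \<subseteq> Msum A C"
    proof
      fix x assume xB: "x \<in> B"
      show "x \<in> Msum A C"
      proof (rule ccontr)
        assume nx: "x \<notin> Msum A C"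
        let ?C' = "Msum C (range (\<lambda>k. sm k x))"
        have s': "lsub sm ?C'" by (rule lsub_Msum[OF C(1) lsub_line])
        have "?C' \<subseteq> B"
        proof (rule subsetI)
          fix y assume "y \<in> ?C'"
          then obtain c z where "c \<in> C" "z \<in> range (\<lambda>k. sm k x)" "y = c + z" by (rule MsumE)
          thus "y \<in> B" using lsubD(2)[OF sB] lsubD(3)[OF sB xB] C(2) by blast
        qed
        moreover have "A \<inter> ?C' = {0}"
        proof -
          { fix a assume aA: "a \<in> A" and aC: "a \<in> ?C'"
            from aC obtain c z where "c \<in> C" "z \<in> range (\<lambda>k. sm k x)" "a = c + z" by (rule MsumE)
            then obtain k where ck: "c \<in> C" "a = c + sm k x" by blast
            have "a = 0"
            proof (cases "k = 0")
              case True thus ?thesis using ck aA C(3) by auto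
            next
              case False
              have "x = sm (inverse k) (a - c)" using ck False by (simp add: sm_inv)
              also have "\<dots> = sm (inverse k) a + sm (inverse k) (- c)" by (simp add: sm_add[symmetric])
              also have "\<dots> \<in> Msum A C" using aA ck lsubD(3)[OF sA] lsubD(3,4)[OF C(1)] by (intro MsumI) auto
              finally show ?thesis using nx by blast
            qed }
          thus ?thesis using lsubD(1)[OF sA] lsubD(1)[OF s'] by blast
        qed
        ultimately have "?C' \<in> ?F" using s' by blast
        moreover have "C \<subseteq> ?C'"
        proof
          fix c assume "c \<in> C"
          moreover have "sm 0 x \<in> range (\<lambda>k. sm k x)" by (rule rangeI)
          ultimately have "c + sm 0 x \<in> ?C'" by (rule MsumI)
          thus "c \<in> ?C'" by simp
        qed
        ultimately have "?C' = C" using max by blast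
        moreover have "0 + sm 1 x \<in> ?C'" using lsubD(1)[OF C(1)] rangeI by (rule MsumI)
        ultimately have "x \<in> C" by simp
        hence "x \<in> Msum A C" using lsubD(1)[OF sA] MsumI[of 0 A x C] by simp
        thus False using nx by blast
      qed
    qed
  qed
  hence "lsub sm C \<and> C \<subseteq> B \<and> A \<inter> C = {0} \<and> Msum A C = B" using C by simp
  thus ?thesis by (rule exI)
qed

lemma complement_UNIV:
  assumes "lsub sm A" shows "\<exists>C. lcompl sm A C"
proof -
  obtain C where "lsub sm C" "A \<inter> C = {0}" "Msum A C = UNIV"
    using complement_exists[OF assms lsub_UNIV] by auto
  hence "lcompl sm A C" using assms unfolding lcompl_def by simp
  thus ?thesis ..
qed

end



context lvs begin

lemma rsubD:
  assumes "rsub sm G"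
  shows "(0,0) \<in> G" "(x,y) \<in> G \<Longrightarrow> (x',y') \<in> G \<Longrightarrow> (x+x',y+y') \<in> G"
    "(x,y) \<in> G \<Longrightarrow> (sm a x, sm a y) \<in> G"
  using assms unfolding rsub_def by blast+

lemma rsub_neg: "rsub sm G \<Longrightarrow> (x,y) \<in> G \<Longrightarrow> (-x,-y) \<in> G"
  using rsubD(3)[of G x y "-1"] by (simp add: sm_neg2)

lemma rsub_diff: "rsub sm G \<Longrightarrow> (x,y) \<in> G \<Longrightarrow> (x',y') \<in> G \<Longrightarrow> (x-x',y-y') \<in> G"
  using rsubD(2)[of G x y "-x'" "-y'"] rsub_neg[of G x' y'] by simp

lemma partial_iso:
  assumes sA: "lsub sm A" and sB: "lsub sm B"
  shows "\<exists>G. rsub sm G \<and> G \<subseteq> A \<times> B \<and> (\<forall>y. (0,y) \<in> G \<longrightarrow> y = 0) \<and> (\<forall>x. (x,0) \<in> G \<longrightarrow> x = 0)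
              \<and> (fst ` G = A \<or> snd ` G = B)"
proof -
  let ?F = "{G. rsub sm G \<and> G \<subseteq> A \<times> B \<and> (\<forall>y. (0,y) \<in> G \<longrightarrow> y = 0) \<and> (\<forall>x. (x,0) \<in> G \<longrightarrow> x = 0)}"
  have "\<exists>M\<in>?F. \<forall>X\<in>?F. M \<subseteq> X \<longrightarrow> X = M"
  proof (rule subset_Zorn_nonempty)
    have "{(0,0)} \<in> ?F" using lsubD(1)[OF sA] lsubD(1)[OF sB] by (auto simp: rsub_def)
    thus "?F \<noteq> {}" by blast
    fix \<C> assume ne: "\<C> \<noteq> {}" and ch: "subset.chain ?F \<C>"
    have chs: "\<C> \<subseteq> ?F" and tot: "\<forall>X\<in>\<C>. \<forall>Y\<in>\<C>. X \<subseteq> Y \<or> Y \<subseteq> X"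
      using ch by (auto simp: subset_chain_def)
    have "rsub sm (\<Union>\<C>)"
      unfolding rsub_def
    proof (intro conjI allI impI)
      obtain Z where "Z \<in> \<C>" using ne by blast
      moreover have "rsub sm Z" using calculation chs by blast
      ultimately show "(0,0) \<in> \<Union>\<C>" using rsubD(1) by blast
    next
      fix x y x' y' assume "(x,y) \<in> \<Union>\<C>" "(x',y') \<in> \<Union>\<C>"
      then obtain X Y where XY: "X \<in> \<C>" "Y \<in> \<C>" "(x,y) \<in> X" "(x',y') \<in> Y" by blast
      with tot have "X \<subseteq> Y \<or> Y \<subseteq> X" by blast
      hence "\<exists>Z\<in>\<C>. (x,y) \<in> Z \<and> (x',y') \<in> Z" using XY by blast
      then obtain Z where Z: "Z \<in> \<C>" "(x,y) \<in> Z" "(x',y') \<in> Z" by blast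
      have "rsub sm Z" using Z(1) chs by blast
      hence "(x + x', y + y') \<in> Z" using rsubD(2) Z(2,3) by blast
      thus "(x + x', y + y') \<in> \<Union>\<C>" using Z(1) by blast
    next
      fix a x y assume "(x,y) \<in> \<Union>\<C>"
      then obtain Z where Z: "Z \<in> \<C>" "(x,y) \<in> Z" by blast
      have "rsub sm Z" using Z(1) chs by blast
      hence "(sm a x, sm a y) \<in> Z" using rsubD(3) Z(2) by blast
      thus "(sm a x, sm a y) \<in> \<Union>\<C>" using Z(1) by blast
    qed
    moreover have "\<Union>\<C> \<subseteq> A \<times> B" using chs by blast
    moreover have "\<forall>y. (0,y) \<in> \<Union>\<C> \<longrightarrow> y = 0" using chs by blast
    moreover have "\<forall>x. (x,0) \<in> \<Union>\<C> \<longrightarrow> x = 0" using chs by blast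
    ultimately show "\<Union>\<C> \<in> ?F" by simp
  qed
  then obtain G where GF: "G \<in> ?F" and max0: "\<forall>X\<in>?F. G \<subseteq> X \<longrightarrow> X = G" by (elim bexE)
  have G: "rsub sm G" "G \<subseteq> A \<times> B" "\<forall>y. (0,y) \<in> G \<longrightarrow> y = 0" "\<forall>x. (x,0) \<in> G \<longrightarrow> x = 0"
    using GF by auto
  have max: "\<And>X. X \<in> ?F \<Longrightarrow> G \<subseteq> X \<Longrightarrow> X = G" using max0 by auto
  have "fst ` G = A \<or> snd ` G = B"
  proof (rule ccontr)
    assume "\<not> ?thesis"
    moreover have "fst ` G \<subseteq> A" "snd ` G \<subseteq> B" using G(2) by auto
    ultimately obtain x y where x: "x \<in> A" "x \<notin> fst ` G" and y: "y \<in> B" "y \<notin> snd ` G" by blast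
    define G' where "G' = {(g1 + sm k x, g2 + sm k y) | g1 g2 k. (g1,g2) \<in> G}"
    have dx: "k = 0" if "(g1,g2) \<in> G" "g1 + sm k x = 0" for g1 g2 k
    proof (rule ccontr)
      assume k: "k \<noteq> 0"
      have "(sm (- inverse k) g1, sm (- inverse k) g2) \<in> G" using rsubD(3)[OF G(1) that(1)] .
      moreover have "sm (- inverse k) g1 = x"
      proof -
        have "g1 = - sm k x" using that(2) by (simp add: eq_neg_iff_add_eq_0)
        hence "sm (- inverse k) g1 = sm (inverse k) (sm k x)" by (simp add: sm_neg sm_neg2)
        thus ?thesis using sm_inv[OF k] by simp
      qed
      ultimately have "x \<in> fst ` G" by force
      thus False using x by blast
    qed
    have dy: "k = 0" if "(g1,g2) \<in> G" "g2 + sm k y = 0" for g1 g2 k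
    proof (rule ccontr)
      assume k: "k \<noteq> 0"
      have "(sm (- inverse k) g1, sm (- inverse k) g2) \<in> G" using rsubD(3)[OF G(1) that(1)] .
      moreover have "sm (- inverse k) g2 = y"
      proof -
        have "g2 = - sm k y" using that(2) by (simp add: eq_neg_iff_add_eq_0)
        hence "sm (- inverse k) g2 = sm (inverse k) (sm k y)" by (simp add: sm_neg sm_neg2)
        thus ?thesis using sm_inv[OF k] by simp
      qed
      ultimately have "y \<in> snd ` G" by force
      thus False using y by blast
    qed
    have "rsub sm G'"
      unfolding rsub_def
    proof (intro conjI allI impI)
      show "(0,0) \<in> G'" unfolding G'_def using rsubD(1)[OF G(1)] by (auto intro!: exI[of _ 0])
    next
      fix u v u' v' assume "(u,v) \<in> G'" "(u',v') \<in> G'"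
      then obtain g1 g2 k g1' g2' k' where "(g1,g2) \<in> G" "(g1',g2') \<in> G"
        "u = g1 + sm k x" "v = g2 + sm k y" "u' = g1' + sm k' x" "v' = g2' + sm k' y"
        unfolding G'_def by blast
      moreover have "(g1 + g1', g2 + g2') \<in> G" using calculation rsubD(2)[OF G(1)] by blast
      moreover have "u + u' = (g1 + g1') + sm (k + k') x" "v + v' = (g2 + g2') + sm (k + k') y"
        using calculation by (simp_all add: sm_add2 algebra_simps)
      ultimately show "(u + u', v + v') \<in> G'" unfolding G'_def by blast
    next
      fix a u v assume "(u,v) \<in> G'"
      then obtain g1 g2 k where "(g1,g2) \<in> G" "u = g1 + sm k x" "v = g2 + sm k y"
        unfolding G'_def by blast
      moreover have "(sm a g1, sm a g2) \<in> G" using calculation rsubD(3)[OF G(1)] by blast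
      moreover have "sm a u = sm a g1 + sm (a * k) x" "sm a v = sm a g2 + sm (a * k) y"
        using calculation by (simp_all add: sm_add sm_mult)
      ultimately show "(sm a u, sm a v) \<in> G'" unfolding G'_def by blast
    qed
    moreover have "G' \<subseteq> A \<times> B"
    proof
      fix p assume "p \<in> G'"
      then obtain g1 g2 k where "(g1,g2) \<in> G" "p = (g1 + sm k x, g2 + sm k y)"
        unfolding G'_def by blast
      thus "p \<in> A \<times> B" using G(2) x y lsubD(2,3)[OF sA] lsubD(2,3)[OF sB] by blast
    qed
    moreover have "\<forall>v. (0,v) \<in> G' \<longrightarrow> v = 0"
    proof (intro allI impI)
      fix v assume "(0,v) \<in> G'"
      then obtain g1 g2 k where g: "(g1,g2) \<in> G" "0 = g1 + sm k x" "v = g2 + sm k y"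
        unfolding G'_def by blast
      hence "k = 0" using dx by metis
      thus "v = 0" using g G(3) by simp
    qed
    moreover have "\<forall>u. (u,0) \<in> G' \<longrightarrow> u = 0"
    proof (intro allI impI)
      fix u assume "(u,0) \<in> G'"
      then obtain g1 g2 k where g: "(g1,g2) \<in> G" "u = g1 + sm k x" "0 = g2 + sm k y"
        unfolding G'_def by blast
      hence "k = 0" using dy by metis
      thus "u = 0" using g G(4) by simp
    qed
    ultimately have "G' \<in> ?F" by simp
    moreover have "G \<subseteq> G'"
    proof
      fix p assume pG: "p \<in> G"
      obtain a b where ab: "p = (a,b)" by (cases p)
      have "(a + sm 0 x, b + sm 0 y) \<in> G'" unfolding G'_def using pG ab by blast
      thus "p \<in> G'" using ab by simp
    qed
    ultimately have "G' = G" using max by blast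
    moreover have "(0 + sm 1 x, 0 + sm 1 y) \<in> G'" unfolding G'_def using rsubD(1)[OF G(1)] by blast
    ultimately have "(x,y) \<in> G" by simp
    thus False using x by force
  qed
  thus ?thesis using G by blast
qed

definition rfun :: "('v \<times> 'v) set \<Rightarrow> 'v \<Rightarrow> 'v" where
  "rfun F x = (THE y. (x,y) \<in> F)"

lemma rfun:
  assumes F: "rsub sm F" and f: "\<forall>y. (0,y) \<in> F \<longrightarrow> y = 0" and t: "\<forall>x. \<exists>y. (x,y) \<in> F"
  shows "(x, rfun F x) \<in> F" "(x,y) \<in> F \<Longrightarrow> rfun F x = y" "llin sm sm (rfun F)"
proof -
  have uniq: "y = y'" if "(x,y) \<in> F" "(x,y') \<in> F" for x y y'
  proof -
    have "(x - x, y - y') \<in> F" using rsub_diff[OF F that] .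
    hence "y - y' = 0" using f by auto
    thus ?thesis by simp
  qed
  have mem: "(x, rfun F x) \<in> F" for x
  proof -
    obtain y where xy: "(x,y) \<in> F" using t by blast
    have "rfun F x = y" unfolding rfun_def using xy uniq by (intro the_equality) auto
    thus ?thesis using xy by simp
  qed
  show "(x, rfun F x) \<in> F" by (rule mem)
  show "(x,y) \<in> F \<Longrightarrow> rfun F x = y" using mem uniq by blast
  show "llin sm sm (rfun F)"
    unfolding llin_def
  proof (intro conjI allI)
    fix x y
    have "(x + y, rfun F x + rfun F y) \<in> F" using rsubD(2)[OF F mem mem] .
    thus "rfun F (x + y) = rfun F x + rfun F y" using mem uniq by blast
  next
    fix a x
    have "(sm a x, sm a (rfun F x)) \<in> F" using rsubD(3)[OF F mem] .
    thus "rfun F (sm a x) = sm a (rfun F x)" using mem uniq by blast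
  qed
qed

lemma llin_0: "llin sm sm' f \<Longrightarrow> f 0 = 0"
  unfolding llin_def by (metis add_0 add_cancel_right_right)

lemma lsub_image: assumes f: "llin sm sm f" and A: "lsub sm A" shows "lsub sm (f ` A)"
  unfolding lsub_def
proof (intro conjI ballI allI)
  show "0 \<in> f ` A" using llin_0[OF f] lsubD(1)[OF A] by (metis image_eqI)
next
  fix x y assume "x \<in> f ` A" "y \<in> f ` A"
  then obtain a b where "a \<in> A" "b \<in> A" "x = f a" "y = f b" by blast
  moreover have "f (a + b) = f a + f b" using f unfolding llin_def by blast
  ultimately show "x + y \<in> f ` A" using lsubD(2)[OF A] by (metis image_eqI)
next
  fix k x assume "x \<in> f ` A"
  then obtain a where "a \<in> A" "x = f a" by blast
  moreover have "f (sm k a) = sm k (f a)" using f unfolding llin_def by blast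
  ultimately show "sm k x \<in> f ` A" using lsubD(3)[OF A] by (metis image_eqI)
qed

end

lemma lvs_psm: "lvs sm \<Longrightarrow> lvs (psm sm)"
  unfolding lvs_def psm_def by (auto simp: lvs.sm_add lvs.sm_add2)




context lvs begin

definition pick :: "'v set \<Rightarrow> 'v" where "pick S = (SOME x. x \<notin> vs_span sm S)"

primrec vl :: "nat \<Rightarrow> 'v list" where
  "vl 0 = []"
| "vl (Suc n) = vl n @ [pick (set (vl n))]"

definition vq :: "nat \<Rightarrow> 'v" where "vq n = pick (set (vl n))"

lemma length_vl[simp]: "length (vl n) = n"
  by (induct n) auto

lemma vl_nth: "i < n \<Longrightarrow> vl n ! i = vq i"
proof (induct n)
  case 0 thus ?case by simp
next
  case (Suc n)
  show ?case
  proof (cases "i < n")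
    case True thus ?thesis using Suc by (simp add: nth_append)
  next
    case False hence "i = n" using Suc.prems by simp
    thus ?thesis by (simp add: nth_append vq_def)
  qed
qed

lemma set_vl: "set (vl n) = vq ` {..<n}"
  by (auto simp: set_conv_nth vl_nth) (metis vl_nth)

lemma in_span: "x \<in> S \<Longrightarrow> x \<in> vs_span sm S"
  unfolding vs_span_def by (rule CollectI, rule exI[of _ "{x}"], rule exI[of _ "\<lambda>_. 1"]) simp

lemma vq_notin:
  assumes nfd: "\<not> finite_dimensional_vs sm"
  shows "vq n \<notin> vs_span sm (vq ` {..<n})"
proof -
  have "vs_span sm (set (vl n)) \<noteq> UNIV" using nfd unfolding finite_dimensional_vs_def by blast
  hence "\<exists>x. x \<notin> vs_span sm (set (vl n))" by blast
  hence "pick (set (vl n)) \<notin> vs_span sm (set (vl n))" unfolding pick_def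
    by (rule someI_ex[of "\<lambda>x. x \<notin> vs_span sm (set (vl n))"])
  thus ?thesis unfolding vq_def[of n] set_vl[of n] .
qed

lemma vq_inj:
  assumes nfd: "\<not> finite_dimensional_vs sm"
  shows "inj vq"
proof -
  have "vq i \<noteq> vq n" if "i < n" for i n
    using vq_notin[OF nfd, of n] in_span[of "vq i" "vq ` {..<n}"] that by auto
  thus ?thesis unfolding inj_def by (metis linorder_neqE_nat)
qed

definition cb :: "(nat \<Rightarrow> 'v) \<Rightarrow> nat \<Rightarrow> (nat \<Rightarrow> 'k) \<Rightarrow> 'v" where
  "cb w n c = (\<Sum>i<n. sm (c i) (w i))"

lemma cb_0[simp]: "cb w 0 c = 0" by (simp add: cb_def)
lemma cb_Suc: "cb w (Suc n) c = cb w n c + sm (c n) (w n)" by (simp add: cb_def)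

lemma cb_smul: "sm k (cb w n c) = cb w n (\<lambda>i. k * c i)"
  by (induct n) (simp_all add: cb_Suc sm_add sm_mult)

lemma cb_add: "cb w n c + cb w n d = cb w n (\<lambda>i. c i + d i)"
  by (induct n) (simp_all add: cb_Suc sm_add2 algebra_simps)

lemma cb_neg: "- cb w n c = cb w n (\<lambda>i. - c i)"
  by (induct n) (simp_all add: cb_Suc sm_neg2)

lemma cb_cong: "(\<And>i. i < n \<Longrightarrow> c i = d i) \<Longrightarrow> cb w n c = cb w n d"
  unfolding cb_def by (rule sum.cong) auto

lemma cb_pad: "m \<le> n \<Longrightarrow> cb w m c = cb w n (\<lambda>i. if i < m then c i else 0)"
proof (induct n)
  case 0 thus ?case by simp
next
  case (Suc n)
  show ?case
  proof (cases "m = Suc n")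
    case True show ?thesis unfolding True by (rule cb_cong) simp
  next
    case False
    hence "m \<le> n" using Suc by simp
    thus ?thesis using Suc by (simp add: cb_Suc)
  qed
qed

lemma cb_zero: "(\<And>i. i < n \<Longrightarrow> c i = 0) \<Longrightarrow> cb w n c = 0"
  unfolding cb_def by (rule sum.neutral) auto

lemma cb_shift: "cb (\<lambda>i. w (Suc i)) n c = cb w (Suc n) (\<lambda>i. if i = 0 then 0 else c (i - 1))"
  unfolding cb_def by (subst sum.lessThan_Suc_shift) simp

lemma cb_in_span:
  assumes nfd: "\<not> finite_dimensional_vs sm"
  shows "cb vq n c \<in> vs_span sm (vq ` {..<n})"
proof -
  have inj: "inj_on vq {..<n}" using vq_inj[OF nfd] by (simp add: inj_on_def inj_def)
  let ?c = "\<lambda>x. c (the_inv_into {..<n} vq x)"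
  have "(\<Sum>x\<in>vq ` {..<n}. sm (?c x) x) = (\<Sum>i<n. sm (?c (vq i)) (vq i))"
    by (rule sum.reindex[OF inj, unfolded comp_def])
  also have "\<dots> = cb vq n c"
  proof -
    have "sm (c (the_inv_into {..<n} vq (vq i))) (vq i) = sm (c i) (vq i)" if "i < n" for i
      using the_inv_into_f_f[OF inj, of i] that by simp
    thus ?thesis unfolding cb_def by (intro sum.cong) auto
  qed
  finally have eq: "(\<Sum>x\<in>vq ` {..<n}. sm (?c x) x) = cb vq n c" .
  show ?thesis unfolding vs_span_def
    apply (rule CollectI)
    apply (rule exI[of _ "vq ` {..<n}"])
    apply (rule exI[of _ ?c])
    using eq by simp
qed

lemma indep:
  assumes nfd: "\<not> finite_dimensional_vs sm"
  shows "cb vq n c = 0 \<Longrightarrow> i < n \<Longrightarrow> c i = 0"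
proof (induct n arbitrary: i)
  case 0 thus ?case by simp
next
  case (Suc n)
  have e: "cb vq n c + sm (c n) (vq n) = 0" using Suc.prems(1) by (simp add: cb_Suc)
  have cn: "c n = 0"
  proof (rule ccontr)
    assume k: "c n \<noteq> 0"
    have "sm (c n) (vq n) = - cb vq n c" using e by (simp add: eq_neg_iff_add_eq_0 add.commute)
    hence "vq n = sm (inverse (c n)) (- cb vq n c)" using sm_inv[OF k] by metis
    also have "\<dots> = cb vq n (\<lambda>i. - inverse (c n) * c i)" by (simp add: sm_neg cb_smul cb_neg)
    finally show False using cb_in_span[OF nfd] vq_notin[OF nfd] by metis
  qed
  show ?case
  proof (cases "i = n")
    case True thus ?thesis using cn by simp
  next
    case False
    hence "i < n" using Suc.prems by simp
    moreover have "cb vq n c = 0" using e cn by simp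
    ultimately show ?thesis using Suc.hyps by blast
  qed
qed

lemma cb_max:
  obtains d d' where "cb w m c = cb w (max m n) d" "cb w n c' = cb w (max m n) d'"
  using cb_pad[of m "max m n" w c] cb_pad[of n "max m n" w c'] by auto

definition SS :: "'v set" where "SS = {cb vq n c | n c. True}"
definition GG :: "('v \<times> 'v) set" where "GG = {(cb vq n c, cb (\<lambda>i. vq (Suc i)) n c) | n c. True}"

lemma lsub_SS: "lsub sm SS"
  unfolding lsub_def SS_def
proof (intro conjI ballI allI)
  show "0 \<in> {cb vq n c |n c. True}" by (rule CollectI, rule exI[of _ 0], simp)
next
  fix x y assume "x \<in> {cb vq n c |n c. True}" "y \<in> {cb vq n c |n c. True}"
  then obtain m n c d where xy: "x = cb vq m c" "y = cb vq n d" by blast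
  obtain c' d' where "x = cb vq (max m n) c'" "y = cb vq (max m n) d'"
    using cb_max[of vq m c n d] xy by metis
  hence "x + y = cb vq (max m n) (\<lambda>i. c' i + d' i)" by (simp add: cb_add)
  thus "x + y \<in> {cb vq n c |n c. True}" by blast
next
  fix a x assume "x \<in> {cb vq n c |n c. True}"
  then obtain n c where "x = cb vq n c" by blast
  hence "sm a x = cb vq n (\<lambda>i. a * c i)" by (simp add: cb_smul)
  thus "sm a x \<in> {cb vq n c |n c. True}" by blast
qed

lemma rsub_GG: "rsub sm GG"
  unfolding rsub_def GG_def
proof (intro conjI allI impI)
  show "(0,0) \<in> {(cb vq n c, cb (\<lambda>i. vq (Suc i)) n c) |n c. True}"
    by (rule CollectI, rule exI[of _ 0], simp)
next
  fix x y x' y'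
  assume "(x,y) \<in> {(cb vq n c, cb (\<lambda>i. vq (Suc i)) n c) |n c. True}"
    "(x',y') \<in> {(cb vq n c, cb (\<lambda>i. vq (Suc i)) n c) |n c. True}"
  then obtain m n c d where xy: "x = cb vq m c" "y = cb (\<lambda>i. vq (Suc i)) m c"
    "x' = cb vq n d" "y' = cb (\<lambda>i. vq (Suc i)) n d" by blast
  let ?M = "max m n"
  let ?c = "\<lambda>i. if i < m then c i else 0" and ?d = "\<lambda>i. if i < n then d i else 0"
  have "x = cb vq ?M ?c" "y = cb (\<lambda>i. vq (Suc i)) ?M ?c" "x' = cb vq ?M ?d" "y' = cb (\<lambda>i. vq (Suc i)) ?M ?d"
    using xy cb_pad by auto
  hence "x + x' = cb vq ?M (\<lambda>i. ?c i + ?d i)" "y + y' = cb (\<lambda>i. vq (Suc i)) ?M (\<lambda>i. ?c i + ?d i)"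
    by (simp_all add: cb_add)
  thus "(x + x', y + y') \<in> {(cb vq n c, cb (\<lambda>i. vq (Suc i)) n c) |n c. True}" by blast
next
  fix a x y assume "(x,y) \<in> {(cb vq n c, cb (\<lambda>i. vq (Suc i)) n c) |n c. True}"
  then obtain n c where "x = cb vq n c" "y = cb (\<lambda>i. vq (Suc i)) n c" by blast
  hence "sm a x = cb vq n (\<lambda>i. a * c i)" "sm a y = cb (\<lambda>i. vq (Suc i)) n (\<lambda>i. a * c i)"
    by (simp_all add: cb_smul)
  thus "(sm a x, sm a y) \<in> {(cb vq n c, cb (\<lambda>i. vq (Suc i)) n c) |n c. True}" by blast
qed

lemma GG_fst: "(x,y) \<in> GG \<Longrightarrow> x \<in> SS" unfolding GG_def SS_def by blast

lemma GG_snd: "(x,y) \<in> GG \<Longrightarrow> y \<in> SS"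
  unfolding GG_def SS_def using cb_shift by blast

lemma GG_dom: "x \<in> SS \<Longrightarrow> \<exists>y. (x,y) \<in> GG" unfolding GG_def SS_def by blast

lemma GG_f:
  assumes nfd: "\<not> finite_dimensional_vs sm"
  shows "(0,y) \<in> GG \<Longrightarrow> y = 0"
proof -
  assume "(0,y) \<in> GG"
  then obtain n c where "0 = cb vq n c" "y = cb (\<lambda>i. vq (Suc i)) n c" unfolding GG_def by blast
  thus "y = 0" using indep[OF nfd] cb_zero by metis
qed

lemma GG_i:
  assumes nfd: "\<not> finite_dimensional_vs sm"
  shows "(x,0) \<in> GG \<Longrightarrow> x = 0"
proof -
  assume "(x,0) \<in> GG"
  then obtain n c where xc: "x = cb vq n c" "0 = cb (\<lambda>i. vq (Suc i)) n c" unfolding GG_def by blast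
  hence "cb vq (Suc n) (\<lambda>i. if i = 0 then 0 else c (i - 1)) = 0" using cb_shift by metis
  hence "\<And>i. i < n \<Longrightarrow> c i = 0" using indep[OF nfd, of "Suc n" _ "Suc i" for i] by fastforce
  thus "x = 0" using xc cb_zero by metis
qed

lemma vq0_notin:
  assumes nfd: "\<not> finite_dimensional_vs sm"
  shows "vq 0 \<notin> snd ` GG"
proof
  assume "vq 0 \<in> snd ` GG"
  then obtain n c where "vq 0 = cb (\<lambda>i. vq (Suc i)) n c" unfolding GG_def by force
  hence "vq 0 = cb vq (Suc n) (\<lambda>i. if i = 0 then 0 else c (i - 1))" using cb_shift by metis
  hence "cb vq (Suc n) (\<lambda>i. if i = 0 then 0 else c (i - 1)) + sm (- 1) (vq 0) = 0" by (simp add: sm_neg2)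
  also have "sm (- 1) (vq 0) = cb vq (Suc n) (\<lambda>i. if i = 0 then - 1 else 0)"
    by (induct n) (simp_all add: cb_Suc)
  finally have "cb vq (Suc n) (\<lambda>i. (if i = 0 then 0 else c (i - 1)) + (if i = 0 then - 1 else 0)) = 0"
    by (simp add: cb_add)
  from indep[OF nfd this, of 0] show False by simp
qed

lemma shift_exists:
  assumes nfd: "\<not> finite_dimensional_vs sm"
  shows "\<exists>\<sigma> a n. llin sm sm \<sigma> \<and> llin sm sm a \<and> (\<forall>u. a (\<sigma> u) = u) \<and> a n = 0 \<and> n \<noteq> 0"
proof -
  obtain W where W: "lcompl sm SS W" using complement_UNIV[OF lsub_SS] by blast
  have sW: "lsub sm W" using W by (simp add: lcompl_def)
  have SW0: "SS \<inter> W = {0}" using W by (simp add: lcompl_def)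
  define H where "H = {(s + w, t + w) | s t w. (s,t) \<in> GG \<and> w \<in> W}"
  have rH: "rsub sm H"
    unfolding rsub_def
  proof (intro conjI allI impI)
    show "(0,0) \<in> H" unfolding H_def using rsubD(1)[OF rsub_GG] lsubD(1)[OF sW] by force
  next
    fix x y x' y' assume "(x,y) \<in> H" "(x',y') \<in> H"
    then obtain s t w s' t' w' where st: "(s,t) \<in> GG" "w \<in> W" "x = s + w" "y = t + w"
      "(s',t') \<in> GG" "w' \<in> W" "x' = s' + w'" "y' = t' + w'" unfolding H_def by blast
    have "(s + s', t + t') \<in> GG" using rsubD(2)[OF rsub_GG st(1) st(5)] .
    moreover have "w + w' \<in> W" using lsubD(2)[OF sW st(2) st(6)] .
    moreover have "x + x' = (s + s') + (w + w')" "y + y' = (t + t') + (w + w')"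
      using st by (simp_all add: algebra_simps)
    ultimately show "(x + x', y + y') \<in> H" unfolding H_def by blast
  next
    fix a x y assume "(x,y) \<in> H"
    then obtain s t w where st: "(s,t) \<in> GG" "w \<in> W" "x = s + w" "y = t + w" unfolding H_def by blast
    have "(sm a s, sm a t) \<in> GG" using rsubD(3)[OF rsub_GG st(1)] .
    moreover have "sm a w \<in> W" using lsubD(3)[OF sW st(2)] .
    moreover have "sm a x = sm a s + sm a w" "sm a y = sm a t + sm a w" using st by (simp_all add: sm_add)
    ultimately show "(sm a x, sm a y) \<in> H" unfolding H_def by blast
  qed
  have fH: "\<forall>y. (0,y) \<in> H \<longrightarrow> y = 0"
  proof (intro allI impI)
    fix y assume "(0,y) \<in> H"
    then obtain s t w where st: "(s,t) \<in> GG" "w \<in> W" "0 = s + w" "y = t + w" unfolding H_def by blast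
    have "s = - w" using st(3) by (simp add: eq_neg_iff_add_eq_0)
    hence "- w \<in> SS" using GG_fst[OF st(1)] by simp
    hence "- (- w) \<in> SS" using lsubD(4)[OF lsub_SS] by blast
    hence "w = 0" using SW0 st(2) by auto
    hence "s = 0" using st(3) by simp
    hence "t = 0" using GG_f[OF nfd] st(1) by simp
    thus "y = 0" using st(4) \<open>w = 0\<close> by simp
  qed
  have tH: "\<forall>x. \<exists>y. (x,y) \<in> H"
  proof
    fix x
    obtain s w where "s \<in> SS" "w \<in> W" "x = s + w" using lcompl_decomp[OF W] by blast
    moreover obtain t where "(s,t) \<in> GG" using GG_dom calculation(1) by blast
    ultimately show "\<exists>y. (x,y) \<in> H" unfolding H_def by blast
  qed
  define \<sigma> where "\<sigma> = rfun H"
  have \<sigma>H: "(x, \<sigma> x) \<in> H" for x using rfun(1)[OF rH fH tH] by (simp add: \<sigma>_def)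
  have l\<sigma>: "llin sm sm \<sigma>" using rfun(3)[OF rH fH tH] by (simp add: \<sigma>_def)
  have inj0: "x = 0" if "\<sigma> x = 0" for x
  proof -
    have "(x, 0) \<in> H" using \<sigma>H[of x] that by simp
    then obtain s t w where st: "(s,t) \<in> GG" "w \<in> W" "x = s + w" "0 = t + w" unfolding H_def by blast
    have "t = - w" using st(4) by (simp add: eq_neg_iff_add_eq_0)
    hence "- w \<in> SS" using GG_snd[OF st(1)] by simp
    hence "- (- w) \<in> SS" using lsubD(4)[OF lsub_SS] by blast
    hence "w = 0" using SW0 st(2) by auto
    hence "t = 0" using st(4) by simp
    hence "s = 0" using GG_i[OF nfd] st(1) by simp
    thus "x = 0" using st(3) \<open>w = 0\<close> by simp
  qed
  have notin: "vq 0 \<notin> range \<sigma>"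
  proof
    assume "vq 0 \<in> range \<sigma>"
    then obtain x where "(x, vq 0) \<in> H" using \<sigma>H by (metis rangeE)
    then obtain s t w where st: "(s,t) \<in> GG" "w \<in> W" "vq 0 = t + w" unfolding H_def by blast
    have v0: "vq 0 \<in> SS" unfolding SS_def
      by (rule CollectI, rule exI[of _ "Suc 0"], rule exI[of _ "\<lambda>_. 1"]) (simp add: cb_Suc)
    have "w = vq 0 - t" using st(3) by simp
    hence "w \<in> SS" using lsubD(5)[OF lsub_SS v0 GG_snd[OF st(1)]] by simp
    hence "w = 0" using SW0 st(2) by auto
    hence "vq 0 \<in> snd ` GG" using st by force
    thus False using vq0_notin[OF nfd] by blast
  qed
  have sR: "lsub sm (range \<sigma>)" using lsub_image[OF l\<sigma> lsub_UNIV] .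
  obtain N where N: "lcompl sm (range \<sigma>) N" using complement_UNIV[OF sR] by blast
  have sN: "lsub sm N" and RN: "range \<sigma> \<inter> N = {0}" using N by (auto simp: lcompl_def)
  define A where "A = {(\<sigma> u + m, u) | u m. m \<in> N}"
  have rA: "rsub sm A"
    unfolding rsub_def
  proof (intro conjI allI impI)
    show "(0,0) \<in> A" unfolding A_def using llin_0[OF l\<sigma>] lsubD(1)[OF sN] by force
  next
    fix x y x' y' assume "(x,y) \<in> A" "(x',y') \<in> A"
    then obtain m m' where mm: "m \<in> N" "x = \<sigma> y + m" "m' \<in> N" "x' = \<sigma> y' + m'" unfolding A_def by blast
    have "x + x' = \<sigma> (y + y') + (m + m')" using mm l\<sigma> by (simp add: llin_def algebra_simps)
    moreover have "m + m' \<in> N" using lsubD(2)[OF sN mm(1,3)] .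
    ultimately show "(x + x', y + y') \<in> A" unfolding A_def by blast
  next
    fix a x y assume "(x,y) \<in> A"
    then obtain m where mm: "m \<in> N" "x = \<sigma> y + m" unfolding A_def by blast
    have "sm a x = \<sigma> (sm a y) + sm a m" using mm l\<sigma> by (simp add: llin_def sm_add)
    moreover have "sm a m \<in> N" using lsubD(3)[OF sN mm(1)] .
    ultimately show "(sm a x, sm a y) \<in> A" unfolding A_def by blast
  qed
  have fA: "\<forall>y. (0,y) \<in> A \<longrightarrow> y = 0"
  proof (intro allI impI)
    fix y assume "(0,y) \<in> A"
    then obtain m where mm: "m \<in> N" "0 = \<sigma> y + m" unfolding A_def by blast
    have "\<sigma> y = - m" using mm(2) by (simp add: eq_neg_iff_add_eq_0)
    hence "- \<sigma> y \<in> N" using mm(1) by simp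
    hence "- (- \<sigma> y) \<in> N" using lsubD(4)[OF sN] by blast
    hence "\<sigma> y = 0" using RN by auto
    thus "y = 0" using inj0 by blast
  qed
  have tA: "\<forall>x. \<exists>y. (x,y) \<in> A"
  proof
    fix x
    obtain r m where "r \<in> range \<sigma>" "m \<in> N" "x = r + m" using lcompl_decomp[OF N] by blast
    thus "\<exists>y. (x,y) \<in> A" unfolding A_def by blast
  qed
  define a where "a = rfun A"
  have la: "llin sm sm a" using rfun(3)[OF rA fA tA] by (simp add: a_def)
  have a\<sigma>: "a (\<sigma> u) = u" for u
  proof -
    have "(\<sigma> u + 0, u) \<in> A" unfolding A_def using lsubD(1)[OF sN] by blast
    thus ?thesis using rfun(2)[OF rA fA tA] by (simp add: a_def)
  qed
  obtain r m where rm: "r \<in> range \<sigma>" "m \<in> N" "vq 0 = r + m" using lcompl_decomp[OF N] by blast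
  have m0: "m \<noteq> 0" using rm notin by auto
  have "(\<sigma> 0 + m, 0) \<in> A" unfolding A_def using rm(2) by blast
  hence "a m = 0" using rfun(2)[OF rA fA tA] llin_0[OF l\<sigma>] by (simp add: a_def)
  thus ?thesis using l\<sigma> la a\<sigma> m0 by blast
qed

end



context lvs begin

lemma int0: "A \<inter> B = {0} \<Longrightarrow> x \<in> A \<Longrightarrow> x \<in> B \<Longrightarrow> x = 0" by blast

lemma core:
  assumes sP: "lsub sm P" and sQ: "lsub sm Q"
    and sP1: "lsub sm P1" and P1P: "P1 \<subseteq> P" and P1I: "P1 \<inter> (P \<inter> Q) = {0}" and P1s: "Msum P1 (P \<inter> Q) = P"
    and Q1Q: "Q1 \<subseteq> Q" and Q1I: "Q1 \<inter> (P \<inter> Q) = {0}"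
    and sW: "lsub sm W" and WI: "W \<inter> Msum P Q = {0}" and Ws: "Msum W (Msum P Q) = UNIV"
    and rG: "rsub sm G" and GPQ: "G \<subseteq> P1 \<times> Q1" and Gf: "\<forall>y. (0,y) \<in> G \<longrightarrow> y = 0"
    and Gi: "\<forall>x. (x,0) \<in> G \<longrightarrow> x = 0" and Gd: "fst ` G = P1"
    and isoY: "\<forall>Y. lcompl sm Y Q \<longrightarrow> (\<exists>\<chi>. llin sm sm \<chi> \<and> inj_on \<chi> Y \<and> \<chi> ` Y = P)"
  shows "\<exists>X Y. lcompl sm X P \<and> lcompl sm Y Q \<and> lcompl sm X Y"
proof -
  define Y where "Y = {x + y + w | x y w. (x,y) \<in> G \<and> w \<in> W}"
  have Gm: "x \<in> P" "y \<in> Q" "x \<in> P1" "y \<in> Q1" if "(x,y) \<in> G" for x y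
    using that GPQ P1P Q1Q by auto
  have sY: "lsub sm Y"
    unfolding lsub_def
  proof (intro conjI ballI allI)
    show "0 \<in> Y" unfolding Y_def using rsubD(1)[OF rG] lsubD(1)[OF sW] by force
  next
    fix u v assume "u \<in> Y" "v \<in> Y"
    then obtain x y w x' y' w' where st: "(x,y) \<in> G" "w \<in> W" "u = x + y + w"
      "(x',y') \<in> G" "w' \<in> W" "v = x' + y' + w'" unfolding Y_def by blast
    have "(x + x', y + y') \<in> G" using rsubD(2)[OF rG st(1) st(4)] .
    moreover have "w + w' \<in> W" using lsubD(2)[OF sW st(2) st(5)] .
    moreover have "u + v = (x + x') + (y + y') + (w + w')" using st by (simp add: algebra_simps)
    ultimately show "u + v \<in> Y" unfolding Y_def by blast
  next
    fix a u assume "u \<in> Y"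
    then obtain x y w where st: "(x,y) \<in> G" "w \<in> W" "u = x + y + w" unfolding Y_def by blast
    have "(sm a x, sm a y) \<in> G" using rsubD(3)[OF rG st(1)] .
    moreover have "sm a w \<in> W" using lsubD(3)[OF sW st(2)] .
    moreover have "sm a u = sm a x + sm a y + sm a w" using st by (simp add: sm_add)
    ultimately show "sm a u \<in> Y" unfolding Y_def by blast
  qed
  have YQ: "Y \<inter> Q = {0}"
  proof -
    { fix v assume vY: "v \<in> Y" and vQ: "v \<in> Q"
      then obtain x y w where st: "(x,y) \<in> G" "w \<in> W" "v = x + y + w" unfolding Y_def by blast
      have "w = (- x) + (v - y)" using st by (simp add: algebra_simps)
      moreover have "- x \<in> P" using lsubD(4)[OF sP Gm(1)[OF st(1)]] .
      moreover have "v - y \<in> Q" using lsubD(5)[OF sQ vQ Gm(2)[OF st(1)]] .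
      ultimately have "w \<in> Msum P Q" using MsumI by metis
      hence w0: "w = 0" using WI st(2) by blast
      hence "x = v - y" using st by (simp add: algebra_simps)
      hence "x \<in> Q" using \<open>v - y \<in> Q\<close> by simp
      hence "x = 0" using Gm[OF st(1)] P1I by blast
      hence "y = 0" using Gf st(1) by blast
      hence "v = 0" using st w0 \<open>x = 0\<close> by simp }
    thus ?thesis using lsubD(1)[OF sY] lsubD(1)[OF sQ] by blast
  qed
  have YP: "Y \<inter> P = {0}"
  proof -
    { fix v assume vY: "v \<in> Y" and vP: "v \<in> P"
      then obtain x y w where st: "(x,y) \<in> G" "w \<in> W" "v = x + y + w" unfolding Y_def by blast
      have "w = (v - x) + (- y)" using st by (simp add: algebra_simps)
      moreover have "v - x \<in> P" using lsubD(5)[OF sP vP Gm(1)[OF st(1)]] .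
      moreover have "- y \<in> Q" using lsubD(4)[OF sQ Gm(2)[OF st(1)]] .
      ultimately have "w \<in> Msum P Q" using MsumI by metis
      hence w0: "w = 0" using WI st(2) by blast
      hence "y = v - x" using st by (simp add: algebra_simps)
      hence "y \<in> P" using \<open>v - x \<in> P\<close> by simp
      hence "y = 0" using Gm[OF st(1)] Q1I by blast
      hence "x = 0" using Gi st(1) by blast
      hence "v = 0" using st w0 \<open>y = 0\<close> by simp }
    thus ?thesis using lsubD(1)[OF sY] lsubD(1)[OF sP] by blast
  qed
  have YsQ: "Msum Y Q = UNIV"
  proof -
    { fix t
      obtain w s where ws: "w \<in> W" "s \<in> Msum P Q" "t = w + s" using Ws by (metis MsumE UNIV_I)
      obtain p q where pq: "p \<in> P" "q \<in> Q" "s = p + q" using ws(2) by (rule MsumE)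
      obtain p1 i where pi: "p1 \<in> P1" "i \<in> P \<inter> Q" "p = p1 + i" using pq(1) P1s by (metis MsumE)
      obtain y where py: "(p1, y) \<in> G" using pi(1) Gd by force
      have "p1 + y + w \<in> Y" unfolding Y_def using py ws(1) by blast
      moreover have "i + q - y \<in> Q" using lsubD(2,5)[OF sQ] pi(2) pq(2) Gm(2)[OF py] by blast
      moreover have "t = (p1 + y + w) + (i + q - y)" using ws pq pi by (simp add: algebra_simps)
      ultimately have "t \<in> Msum Y Q" using MsumI by metis }
    thus ?thesis by blast
  qed
  have cYQ: "lcompl sm Y Q" using sY sQ YQ YsQ by (simp add: lcompl_def)
  obtain \<chi> where l\<chi>: "llin sm sm \<chi>" and i\<chi>: "inj_on \<chi> Y" and r\<chi>: "\<chi> ` Y = P"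
    using isoY cYQ by blast
  have \<chi>add: "\<chi> (a + b) = \<chi> a + \<chi> b" for a b using l\<chi> by (simp add: llin_def)
  have \<chi>sm: "\<chi> (sm k a) = sm k (\<chi> a)" for k a using l\<chi> by (simp add: llin_def)
  have \<chi>0: "\<chi> 0 = 0" using llin_0[OF l\<chi>] .
  have \<chi>P: "y \<in> Y \<Longrightarrow> \<chi> y \<in> P" for y using r\<chi> by blast
  have sPY: "lsub sm (Msum P Y)" using lsub_Msum[OF sP sY] .
  obtain Z where sZ: "lsub sm Z" and ZI: "Msum P Y \<inter> Z = {0}" and Zs: "Msum (Msum P Y) Z = UNIV"
    using complement_exists[OF sPY lsub_UNIV] by blast
  define X where "X = {z + y + \<chi> y | z y. z \<in> Z \<and> y \<in> Y}"
  have sX: "lsub sm X"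
    unfolding lsub_def
  proof (intro conjI ballI allI)
    show "0 \<in> X" unfolding X_def using lsubD(1)[OF sZ] lsubD(1)[OF sY] \<chi>0 by force
  next
    fix u v assume "u \<in> X" "v \<in> X"
    then obtain z y z' y' where st: "z \<in> Z" "y \<in> Y" "u = z + y + \<chi> y"
      "z' \<in> Z" "y' \<in> Y" "v = z' + y' + \<chi> y'" unfolding X_def by blast
    have "z + z' \<in> Z" using lsubD(2)[OF sZ st(1) st(4)] .
    moreover have "y + y' \<in> Y" using lsubD(2)[OF sY st(2) st(5)] .
    moreover have "u + v = (z + z') + (y + y') + \<chi> (y + y')" using st by (simp add: \<chi>add algebra_simps)
    ultimately show "u + v \<in> X" unfolding X_def by blast
  next
    fix a u assume "u \<in> X"
    then obtain z y where st: "z \<in> Z" "y \<in> Y" "u = z + y + \<chi> y" unfolding X_def by blast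
    have "sm a z \<in> Z" using lsubD(3)[OF sZ st(1)] .
    moreover have "sm a y \<in> Y" using lsubD(3)[OF sY st(2)] .
    moreover have "sm a u = sm a z + sm a y + \<chi> (sm a y)" using st by (simp add: sm_add \<chi>sm)
    ultimately show "sm a u \<in> X" unfolding X_def by blast
  qed
  have XP: "X \<inter> P = {0}"
  proof -
    { fix v assume vX: "v \<in> X" and vP: "v \<in> P"
      then obtain z y where st: "z \<in> Z" "y \<in> Y" "v = z + y + \<chi> y" unfolding X_def by blast
      have "z = (v - \<chi> y) + (- y)" using st by (simp add: algebra_simps)
      moreover have "v - \<chi> y \<in> P" using lsubD(5)[OF sP vP \<chi>P[OF st(2)]] .
      moreover have "- y \<in> Y" using lsubD(4)[OF sY st(2)] .
      ultimately have "z \<in> Msum P Y" using MsumI by metis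
      hence z0: "z = 0" using ZI st(1) by blast
      hence "y = v - \<chi> y" using st by (simp add: algebra_simps)
      hence "y \<in> P" using \<open>v - \<chi> y \<in> P\<close> by simp
      hence "y = 0" using YP st(2) by blast
      hence "v = 0" using st z0 \<chi>0 by simp }
    thus ?thesis using lsubD(1)[OF sX] lsubD(1)[OF sP] by blast
  qed
  have XsP: "Msum X P = UNIV"
  proof -
    { fix t
      obtain m z where mz: "m \<in> Msum P Y" "z \<in> Z" "t = m + z" using Zs by (metis MsumE UNIV_I)
      obtain p y where py: "p \<in> P" "y \<in> Y" "m = p + y" using mz(1) by (rule MsumE)
      have "z + y + \<chi> y \<in> X" unfolding X_def using mz(2) py(2) by blast
      moreover have "p - \<chi> y \<in> P" using lsubD(5)[OF sP py(1) \<chi>P[OF py(2)]] .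
      moreover have "t = (z + y + \<chi> y) + (p - \<chi> y)" using mz py by (simp add: algebra_simps)
      ultimately have "t \<in> Msum X P" using MsumI by metis }
    thus ?thesis by blast
  qed
  have XY: "X \<inter> Y = {0}"
  proof -
    { fix v assume vX: "v \<in> X" and vY: "v \<in> Y"
      then obtain z y where st: "z \<in> Z" "y \<in> Y" "v = z + y + \<chi> y" unfolding X_def by blast
      have "z = (- \<chi> y) + (v - y)" using st by (simp add: algebra_simps)
      moreover have "- \<chi> y \<in> P" using lsubD(4)[OF sP \<chi>P[OF st(2)]] .
      moreover have "v - y \<in> Y" using lsubD(5)[OF sY vY st(2)] .
      ultimately have "z \<in> Msum P Y" using MsumI by metis
      hence z0: "z = 0" using ZI st(1) by blast
      hence "\<chi> y = v - y" using st by (simp add: algebra_simps)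
      hence "\<chi> y \<in> Y" using \<open>v - y \<in> Y\<close> by simp
      hence "\<chi> y = 0" using YP \<chi>P[OF st(2)] by blast
      hence "\<chi> y = \<chi> 0" using \<chi>0 by simp
      hence "y = 0" using i\<chi> st(2) lsubD(1)[OF sY] by (meson inj_onD)
      hence "v = 0" using st z0 \<chi>0 by simp }
    thus ?thesis using lsubD(1)[OF sX] lsubD(1)[OF sY] by blast
  qed
  have XsY: "Msum X Y = UNIV"
  proof -
    { fix t
      obtain m z where mz: "m \<in> Msum P Y" "z \<in> Z" "t = m + z" using Zs by (metis MsumE UNIV_I)
      obtain p y where py: "p \<in> P" "y \<in> Y" "m = p + y" using mz(1) by (rule MsumE)
      obtain y0 where y0: "y0 \<in> Y" "p = \<chi> y0" using py(1) r\<chi> by blast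
      have "z + y0 + \<chi> y0 \<in> X" unfolding X_def using mz(2) y0(1) by blast
      moreover have "y - y0 \<in> Y" using lsubD(5)[OF sY py(2) y0(1)] .
      moreover have "t = (z + y0 + \<chi> y0) + (y - y0)" using mz py y0 by (simp add: algebra_simps)
      ultimately have "t \<in> Msum X Y" using MsumI by metis }
    thus ?thesis by blast
  qed
  have "lcompl sm X P" using sX sP XP XsP by (simp add: lcompl_def)
  moreover have "lcompl sm X Y" using sX sY XY XsY by (simp add: lcompl_def)
  ultimately show ?thesis using cYQ by blast
qed

lemma three_step:
  assumes sP: "lsub sm P" and sQ: "lsub sm Q"
    and isoY: "\<forall>Y. lcompl sm Y Q \<longrightarrow> (\<exists>\<chi>. llin sm sm \<chi> \<and> inj_on \<chi> Y \<and> \<chi> ` Y = P)"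
    and isoX: "\<forall>X. lcompl sm X P \<longrightarrow> (\<exists>\<chi>. llin sm sm \<chi> \<and> inj_on \<chi> X \<and> \<chi> ` X = Q)"
  shows "\<exists>X Y. lcompl sm X P \<and> lcompl sm Y Q \<and> lcompl sm X Y"
proof -
  have sI: "lsub sm (P \<inter> Q)" using lsub_Int[OF sP sQ] .
  obtain P1 where P1: "lsub sm P1" "P1 \<subseteq> P" "(P \<inter> Q) \<inter> P1 = {0}" "Msum (P \<inter> Q) P1 = P"
    using complement_exists[OF sI sP] by blast
  obtain Q1 where Q1: "lsub sm Q1" "Q1 \<subseteq> Q" "(P \<inter> Q) \<inter> Q1 = {0}" "Msum (P \<inter> Q) Q1 = Q"
    using complement_exists[OF sI sQ] by blast
  have sPQ: "lsub sm (Msum P Q)" using lsub_Msum[OF sP sQ] .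
  obtain W where W: "lsub sm W" "Msum P Q \<inter> W = {0}" "Msum (Msum P Q) W = UNIV"
    using complement_exists[OF sPQ lsub_UNIV] by blast
  obtain G where G: "rsub sm G" "G \<subseteq> P1 \<times> Q1" "\<forall>y. (0,y) \<in> G \<longrightarrow> y = 0" "\<forall>x. (x,0) \<in> G \<longrightarrow> x = 0"
    "fst ` G = P1 \<or> snd ` G = Q1"
    using partial_iso[OF P1(1) Q1(1)] by blast
  have P1': "P1 \<inter> (P \<inter> Q) = {0}" "Msum P1 (P \<inter> Q) = P" using P1 by (auto simp: Msum_comm)
  have Q1': "Q1 \<inter> (P \<inter> Q) = {0}" "Msum Q1 (P \<inter> Q) = Q" using Q1 by (auto simp: Msum_comm)
  have W': "W \<inter> Msum P Q = {0}" "Msum W (Msum P Q) = UNIV" using W by (auto simp: Msum_comm)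
  show ?thesis
  proof (cases "fst ` G = P1")
    case True
    show ?thesis
      by (rule core[OF sP sQ P1(1) P1(2) P1'(1) P1'(2) Q1(2) Q1'(1) W(1) W'(1) W'(2) G(1) G(2) G(3) G(4) True isoY])
  next
    case False
    hence Gr: "snd ` G = Q1" using G(5) by blast
    define G' where "G' = {(y,x) | x y. (x,y) \<in> G}"
    have rG': "rsub sm G'" using G(1) unfolding rsub_def G'_def by blast
    have G'2: "G' \<subseteq> Q1 \<times> P1" using G(2) unfolding G'_def by blast
    have G'3: "\<forall>y. (0,y) \<in> G' \<longrightarrow> y = 0" using G(4) unfolding G'_def by blast
    have G'4: "\<forall>x. (x,0) \<in> G' \<longrightarrow> x = 0" using G(3) unfolding G'_def by blast
    have G'5: "fst ` G' = Q1" using Gr unfolding G'_def by force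
    have QP: "Q \<inter> P = P \<inter> Q" by blast
    have MQP: "Msum Q P = Msum P Q" by (rule Msum_comm)
    obtain X' Y' where XY: "lcompl sm X' Q" "lcompl sm Y' P" "lcompl sm X' Y'"
      using core[OF sQ sP Q1(1) Q1(2), unfolded QP MQP, OF Q1'(1) Q1'(2) P1(2) P1'(1) W(1) W'(1) W'(2)
                 rG' G'2 G'3 G'4 G'5 isoX] by blast
    thus ?thesis using lcompl_sym by blast
  qed
qed

end



definition row :: "('u::ab_group_add \<Rightarrow> 'u) \<Rightarrow> ('u \<Rightarrow> 'u) \<Rightarrow> 'u \<times> 'u \<Rightarrow> 'u" where
  "row a b z = a (fst z) + b (snd z)"

definition mm :: "('u::ab_group_add \<Rightarrow> 'u) \<Rightarrow> ('u \<Rightarrow> 'u) \<Rightarrow> ('u \<Rightarrow> 'u) \<Rightarrow> ('u \<Rightarrow> 'u) \<Rightarrow> 'u \<times> 'u \<Rightarrow> 'u \<times> 'u" where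
  "mm a b c d z = (row a b z, row c d z)"

definition rk :: "('u::ab_group_add \<Rightarrow> 'u) \<Rightarrow> ('u \<Rightarrow> 'u) \<Rightarrow> ('u \<times> 'u) set" where
  "rk a b = {z. row a b z = 0}"

definition pk :: "(('u::ab_group_add \<Rightarrow> 'u) \<times> ('u \<Rightarrow> 'u)) set \<Rightarrow> ('u \<times> 'u) set" where
  "pk p = {z. \<forall>(r,s)\<in>p. r (fst z) + s (snd z) = 0}"

lemma psm_Pair[simp]: "psm sm k (x,y) = (sm k x, sm k y)" by (simp add: psm_def)

lemma End_simps:
  "carrier (End_ring sm) = {f. vs_linear sm f}"
  "mult (End_ring sm) = (\<lambda>f g. f \<circ> g)"
  "add (End_ring sm) = (\<lambda>f g x. f x + g x)"
  "one (End_ring sm) = id"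
  "zero (End_ring sm) = (\<lambda>_. 0)"
  by (simp_all add: End_ring_def)

lemma vs_linear_llin: "vs_linear sm f = llin sm sm f"
  by (simp add: vs_linear_def llin_def)

locale endo = lvs sm for sm :: "'k::division_ring \<Rightarrow> 'u::ab_group_add \<Rightarrow> 'u"

sublocale endo \<subseteq> V: lvs "psm sm"
  by (rule lvs_psm, unfold_locales)

context endo begin

abbreviation "R \<equiv> End_ring sm"
abbreviation "lin \<equiv> llin sm sm"

lemma linD: assumes "lin f" shows "f (x + y) = f x + f y" "f (sm k x) = sm k (f x)" "f 0 = 0"
  "f (- x) = - f x" "f (x - y) = f x - f y"
proof -
  show a: "f (x + y) = f x + f y" for x y using assms by (simp add: llin_def)
  show "f (sm k x) = sm k (f x)" using assms by (simp add: llin_def)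
  show z: "f 0 = 0" using llin_0[OF assms] .
  show n: "f (- x) = - f x" for x using a[of x "-x"] z by (metis add_eq_0_iff2 neg_eq_iff_add_eq_0 right_minus)
  show "f (x - y) = f x - f y" using a[of x "-y"] n[of y] by simp
qed

lemma row_lin:
  assumes "lin a" "lin b"
  shows "row a b (z + z') = row a b z + row a b z'" "row a b (psm sm k z) = sm k (row a b z)"
    "row a b 0 = 0" "row a b (z - z') = row a b z - row a b z'"
  using assms by (simp_all add: row_def linD algebra_simps psm_def sm_add)

lemma mm_lin:
  assumes "lin a" "lin b" "lin c" "lin d"
  shows "mm a b c d (z + z') = mm a b c d z + mm a b c d z'"
    "mm a b c d (psm sm k z) = psm sm k (mm a b c d z)"
    "mm a b c d 0 = 0"
proof -
  show "mm a b c d (z + z') = mm a b c d z + mm a b c d z'" using assms by (simp add: mm_def row_lin)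
  show "mm a b c d (psm sm k z) = psm sm k (mm a b c d z)" using assms by (simp add: mm_def row_lin)
  have "mm a b c d 0 = (0,0)" using assms by (simp add: mm_def row_lin)
  thus "mm a b c d 0 = 0" by (simp add: zero_prod_def)
qed

lemma inv_lin:
  assumes M: "bij M" and a: "\<And>z z'. M (z + z') = M z + M z'" and s: "\<And>k z. M (psm sm k z) = psm sm k (M z)"
  shows "inv_into UNIV M (z + z') = inv_into UNIV M z + inv_into UNIV M z'" "inv_into UNIV M (psm sm k z) = psm sm k (inv_into UNIV M z)"
proof -
  have ii: "inv_into UNIV M (M w) = w" for w using M by (simp add: bij_is_inj)
  have si: "M (inv_into UNIV M w) = w" for w using M by (simp add: bij_is_surj surj_f_inv_f)
  show "inv_into UNIV M (z + z') = inv_into UNIV M z + inv_into UNIV M z'"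
    using ii[of "inv_into UNIV M z + inv_into UNIV M z'"] a[of "inv_into UNIV M z" "inv_into UNIV M z'"] si by simp
  show "inv_into UNIV M (psm sm k z) = psm sm k (inv_into UNIV M z)"
    using ii[of "psm sm k (inv_into UNIV M z)"] s[of k "inv_into UNIV M z"] si by simp
qed

lemma MI1:
  assumes "mat2_invertible R a b c d"
  shows "lin a" "lin b" "lin c" "lin d" "bij (mm a b c d)"
proof -
  from assms obtain e f g h where lins: "lin a" "lin b" "lin c" "lin d" "lin e" "lin f" "lin g" "lin h"
    and eqs: "(\<lambda>x. a (e x) + b (g x)) = id" "(\<lambda>x. a (f x) + b (h x)) = (\<lambda>_. 0)"
      "(\<lambda>x. c (e x) + d (g x)) = (\<lambda>_. 0)" "(\<lambda>x. c (f x) + d (h x)) = id"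
      "(\<lambda>x. e (a x) + f (c x)) = id" "(\<lambda>x. e (b x) + f (d x)) = (\<lambda>_. 0)"
      "(\<lambda>x. g (a x) + h (c x)) = (\<lambda>_. 0)" "(\<lambda>x. g (b x) + h (d x)) = id"
    unfolding mat2_invertible_def End_simps vs_linear_llin by (auto simp: o_def)
  show "lin a" "lin b" "lin c" "lin d" using lins by auto
  have e1: "a (e x) + b (g x) = x" "a (f x) + b (h x) = 0" "c (e x) + d (g x) = 0" "c (f x) + d (h x) = x"
    "e (a x) + f (c x) = x" "e (b x) + f (d x) = 0" "g (a x) + h (c x) = 0" "g (b x) + h (d x) = x" for x
    using eqs by (metis id_apply)+
  have fg: "mm a b c d \<circ> mm e f g h = id"
  proof
    fix z :: "'u \<times> 'u"
    obtain x y where z: "z = (x,y)" by (cases z)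
    have "a (e x + f y) + b (g x + h y) = (a (e x) + b (g x)) + (a (f y) + b (h y))"
      using lins by (simp add: linD algebra_simps)
    moreover have "c (e x + f y) + d (g x + h y) = (c (e x) + d (g x)) + (c (f y) + d (h y))"
      using lins by (simp add: linD algebra_simps)
    ultimately show "(mm a b c d \<circ> mm e f g h) z = id z" using e1 by (simp add: z mm_def row_def)
  qed
  have gf: "mm e f g h \<circ> mm a b c d = id"
  proof
    fix z :: "'u \<times> 'u"
    obtain x y where z: "z = (x,y)" by (cases z)
    have "e (a x + b y) + f (c x + d y) = (e (a x) + f (c x)) + (e (b y) + f (d y))"
      using lins by (simp add: linD algebra_simps)
    moreover have "g (a x + b y) + h (c x + d y) = (g (a x) + h (c x)) + (g (b y) + h (d y))"
      using lins by (simp add: linD algebra_simps)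
    ultimately show "(mm e f g h \<circ> mm a b c d) z = id z" using e1 by (simp add: z mm_def row_def)
  qed
  show "bij (mm a b c d)" by (rule o_bij[OF gf fg])
qed

lemma MI2:
  assumes lins: "lin a" "lin b" "lin c" "lin d" and M: "bij (mm a b c d)"
  shows "mat2_invertible R a b c d"
proof -
  let ?M = "mm a b c d"
  let ?N = "inv_into UNIV ?M"
  have ii: "?N (?M w) = w" for w using M by (simp add: bij_is_inj)
  have si: "?M (?N w) = w" for w using M by (simp add: bij_is_surj surj_f_inv_f)
  have Na: "?N (z + z') = ?N z + ?N z'" and Ns: "?N (psm sm k z) = psm sm k (?N z)" for z z' k
    using inv_lin[OF M mm_lin(1)[OF lins] mm_lin(2)[OF lins]] by auto
  define e where "e x = fst (?N (x,0))" for x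
  define g where "g x = snd (?N (x,0))" for x
  define f where "f y = fst (?N (0,y))" for y
  define h where "h y = snd (?N (0,y))" for y
  have Na1: "?N (x + x', 0) = ?N (x,0) + ?N (x',0)" for x x' using Na[of "(x,0)" "(x',0)"] by simp
  have Na2: "?N (0, y + y') = ?N (0,y) + ?N (0,y')" for y y' using Na[of "(0,y)" "(0,y')"] by simp
  have Ns1: "?N (sm k x, 0) = psm sm k (?N (x,0))" for k x using Ns[of k "(x,0)"] by simp
  have Ns2: "?N (0, sm k y) = psm sm k (?N (0,y))" for k y using Ns[of k "(0,y)"] by simp
  have le: "lin e" "lin f" "lin g" "lin h"
    unfolding llin_def e_def f_def g_def h_def
    by (simp_all add: Na1 Na2 Ns1 Ns2 psm_def)
  have rowM: "row a b (?N w) = fst w" "row c d (?N w) = snd w" for w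
    using si[of w] by (simp_all add: mm_def prod_eq_iff)
  have Mx: "?M (x,0) = (a x, c x)" "?M (0,y) = (b y, d y)" for x y
    using lins by (simp_all add: mm_def row_def linD)
  have NMx: "?N (a x, c x) = (x,0)" "?N (b y, d y) = (0,y)" for x y
    using ii[of "(x,0)"] ii[of "(0,y)"] Mx by simp_all
  have sp: "?N (u, v) = ?N (u,0) + ?N (0,v)" for u v using Na[of "(u,0)" "(0,v)"] by simp
  have eq1: "(\<lambda>x. a (e x) + b (g x)) = id" using rowM(1)[of "(x,0)" for x]
    by (auto simp: e_def g_def row_def)
  have eq2: "(\<lambda>x. a (f x) + b (h x)) = (\<lambda>_. 0)" using rowM(1)[of "(0,x)" for x]
    by (auto simp: f_def h_def row_def)
  have eq3: "(\<lambda>x. c (e x) + d (g x)) = (\<lambda>_. 0)" using rowM(2)[of "(x,0)" for x]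
    by (auto simp: e_def g_def row_def)
  have eq4: "(\<lambda>x. c (f x) + d (h x)) = id" using rowM(2)[of "(0,x)" for x]
    by (auto simp: f_def h_def row_def)
  have eq5: "(\<lambda>x. e (a x) + f (c x)) = id"
  proof
    fix x show "e (a x) + f (c x) = id x" using arg_cong[OF trans[OF sp[of "a x" "c x", symmetric] NMx(1)[of x]], of fst] by (simp add: e_def f_def)
  qed
  have eq6: "(\<lambda>x. e (b x) + f (d x)) = (\<lambda>_. 0)"
  proof
    fix x show "e (b x) + f (d x) = 0" using arg_cong[OF trans[OF sp[of "b x" "d x", symmetric] NMx(2)[of x]], of fst] by (simp add: e_def f_def)
  qed
  have eq7: "(\<lambda>x. g (a x) + h (c x)) = (\<lambda>_. 0)"
  proof
    fix x show "g (a x) + h (c x) = 0" using arg_cong[OF trans[OF sp[of "a x" "c x", symmetric] NMx(1)[of x]], of snd] by (simp add: g_def h_def)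
  qed
  have eq8: "(\<lambda>x. g (b x) + h (d x)) = id"
  proof
    fix x show "g (b x) + h (d x) = id x" using arg_cong[OF trans[OF sp[of "b x" "d x", symmetric] NMx(2)[of x]], of snd] by (simp add: g_def h_def)
  qed
  show ?thesis
    unfolding mat2_invertible_def End_simps vs_linear_llin
    using lins le eq1 eq2 eq3 eq4 eq5 eq6 eq7 eq8 by (auto simp: o_def)
qed

lemma adm_iff: "admissible R a b \<longleftrightarrow> (\<exists>c d. lin a \<and> lin b \<and> lin c \<and> lin d \<and> bij (mm a b c d))"
proof
  assume "admissible R a b"
  then obtain c d where m: "mat2_invertible R a b c d" unfolding admissible_def by blast
  have "lin a \<and> lin b \<and> lin c \<and> lin d \<and> bij (mm a b c d)" using MI1[OF m] by blast
  thus "\<exists>c d. lin a \<and> lin b \<and> lin c \<and> lin d \<and> bij (mm a b c d)" by blast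
next
  assume "\<exists>c d. lin a \<and> lin b \<and> lin c \<and> lin d \<and> bij (mm a b c d)"
  then obtain c d where "lin a" "lin b" "lin c" "lin d" "bij (mm a b c d)" by blast
  moreover hence "mat2_invertible R a b c d" by (rule MI2)
  ultimately show "admissible R a b" unfolding admissible_def End_simps vs_linear_llin by blast
qed

lemma pk_cyc: assumes "lin a" "lin b" shows "pk (cyc R a b) = rk a b"
proof
  show "pk (cyc R a b) \<subseteq> rk a b"
  proof (rule subsetI)
    fix z assume z: "z \<in> pk (cyc R a b)"
    have mem: "(id \<circ> a, id \<circ> b) \<in> cyc R a b" unfolding cyc_def End_simps vs_linear_llin
      apply (rule CollectI) apply (rule exI[of _ id]) by (simp add: llin_def)
    from z have "\<forall>(r,s)\<in>cyc R a b. r (fst z) + s (snd z) = 0" unfolding pk_def by simp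
    from bspec[OF this mem] have "(id \<circ> a) (fst z) + (id \<circ> b) (snd z) = 0" by simp
    thus "z \<in> rk a b" unfolding rk_def row_def by simp
  qed
  show "rk a b \<subseteq> pk (cyc R a b)"
  proof (rule subsetI)
    fix z assume z: "z \<in> rk a b"
    have key: "r (a (fst z)) + r (b (snd z)) = 0" if r: "lin r" for r
    proof -
      have "a (fst z) + b (snd z) = 0" using z by (simp add: rk_def row_def)
      hence "r (a (fst z) + b (snd z)) = 0" using linD(3)[OF r] by simp
      thus ?thesis using linD(1)[OF r] by simp
    qed
    show "z \<in> pk (cyc R a b)" unfolding pk_def
    proof (rule CollectI, rule ballI)
      fix pr assume "pr \<in> cyc R a b"
      then obtain r where r: "lin r" "pr = (r \<circ> a, r \<circ> b)"
        unfolding cyc_def End_simps vs_linear_llin by blast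
      show "case pr of (r, s) \<Rightarrow> r (fst z) + s (snd z) = 0" using key[OF r(1)] r(2) by simp
    qed
  qed
qed

lemma rk_sub: "lin a \<Longrightarrow> lin b \<Longrightarrow> lsub (psm sm) (rk a b)"
  unfolding lsub_def rk_def by (simp add: row_lin)

lemma adm_surj: assumes "admissible R a b" shows "\<exists>z. row a b z = u"
proof -
  obtain c d where "bij (mm a b c d)" using assms adm_iff by blast
  then obtain z where "mm a b c d z = (u, 0)" by (metis bij_is_surj surjD)
  hence "row a b z = u" by (simp add: mm_def)
  thus ?thesis by blast
qed

end



context endo begin

abbreviation "PL \<equiv> proj_line R"

lemma row_inv:
  assumes "bij (mm a b c d)"
  shows "row a b (inv_into UNIV (mm a b c d) w) = fst w" "row c d (inv_into UNIV (mm a b c d) w) = snd w"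
    "inv_into UNIV (mm a b c d) (mm a b c d z) = z"
proof -
  have "mm a b c d (inv_into UNIV (mm a b c d) w) = w" using assms by (simp add: bij_is_surj surj_f_inv_f)
  thus "row a b (inv_into UNIV (mm a b c d) w) = fst w" "row c d (inv_into UNIV (mm a b c d) w) = snd w"
    by (auto simp: mm_def prod_eq_iff)
  show "inv_into UNIV (mm a b c d) (mm a b c d z) = z" using assms by (simp add: bij_is_inj)
qed

lemma bij_of_compl:
  assumes la: "lin a" and lb: "lin b" and lc: "lin c" and ld: "lin d"
    and sa: "\<forall>u. \<exists>z. row a b z = u" and sc: "\<forall>u. \<exists>z. row c d z = u"
    and C: "lcompl (psm sm) (rk a b) (rk c d)"
  shows "bij (mm a b c d)"
proof (rule bijI)
  show "inj (mm a b c d)"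
  proof (rule injI)
    fix z z' assume "mm a b c d z = mm a b c d z'"
    hence "row a b z = row a b z'" "row c d z = row c d z'" by (simp_all add: mm_def)
    hence "row a b (z - z') = 0" "row c d (z - z') = 0" using row_lin(4)[OF la lb] row_lin(4)[OF lc ld] by simp_all
    hence "z - z' \<in> rk a b \<inter> rk c d" by (simp add: rk_def)
    moreover have "rk a b \<inter> rk c d = {0}" using C by (simp add: lcompl_def)
    ultimately have "z - z' = 0" by blast
    thus "z = z'" by simp
  qed
  show "surj (mm a b c d)"
    unfolding surj_def
  proof
    fix w :: "'u \<times> 'u"
    obtain u v where w: "w = (u,v)" by (cases w)
    obtain z1 where z1: "row a b z1 = u" using sa by blast
    obtain z2 where z2: "row c d z2 = v" using sc by blast
    obtain k1 k2 where k: "k1 \<in> rk a b" "k2 \<in> rk c d" "z1 = k1 + k2" using V.lcompl_decomp[OF C] by blast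
    obtain k1' k2' where k': "k1' \<in> rk a b" "k2' \<in> rk c d" "z2 = k1' + k2'" using V.lcompl_decomp[OF C] by blast
    have "row a b (k2 + k1') = u"
      using z1 k k' row_lin(1)[OF la lb] by (simp add: rk_def)
    moreover have "row c d (k2 + k1') = v"
      using z2 k k' row_lin(1)[OF lc ld] by (simp add: rk_def)
    ultimately have "w = mm a b c d (k2 + k1')" using w by (simp add: mm_def)
    thus "\<exists>z. w = mm a b c d z" by blast
  qed
qed

lemma PL_E:
  assumes "p \<in> PL"
  obtains a b c d where "p = cyc R a b" "admissible R a b" "lin a" "lin b" "lin c" "lin d" "bij (mm a b c d)"
proof -
  obtain a b where ab: "p = cyc R a b" "admissible R a b" using assms unfolding proj_line_def by blast
  then obtain c d where "lin a" "lin b" "lin c" "lin d" "bij (mm a b c d)" using adm_iff by blast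
  thus thesis using ab that by blast
qed

lemma distant_iff: "distant R p q \<longleftrightarrow> p \<in> PL \<and> q \<in> PL \<and> lcompl (psm sm) (pk p) (pk q)"
proof
  assume "distant R p q"
  then obtain a b c d where ad: "admissible R a b" "admissible R c d" "p = cyc R a b" "q = cyc R c d"
    and m: "mat2_invertible R a b c d" unfolding distant_def by blast
  have PLs: "p \<in> PL" "q \<in> PL" using ad unfolding proj_line_def by blast+
  note l = MI1[OF m]
  let ?M = "mm a b c d"
  let ?N = "inv_into UNIV ?M"
  have pk: "pk p = rk a b" "pk q = rk c d" using pk_cyc l ad by auto
  have I: "rk a b \<inter> rk c d = {0}"
  proof -
    { fix z assume "z \<in> rk a b" "z \<in> rk c d"
      hence "?M z = ?M 0" using mm_lin(3)[OF l(1-4)] by (simp add: rk_def mm_def zero_prod_def)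
      hence "z = 0" using l(5) by (simp add: bij_is_inj inj_eq) }
    moreover have "0 \<in> rk a b \<inter> rk c d" using rk_sub[OF l(1,2)] rk_sub[OF l(3,4)] by (simp add: lsub_def)
    ultimately show ?thesis by blast
  qed
  have S: "Msum (rk a b) (rk c d) = UNIV"
  proof -
    { fix z
      let ?w = "?M z"
      have add: "?N (x + y) = ?N x + ?N y" for x y
        using inv_lin(1)[OF l(5) mm_lin(1)[OF l(1-4)] mm_lin(2)[OF l(1-4)]] by simp
      have "?N (fst ?w, 0) + ?N (0, snd ?w) = ?N ((fst ?w, 0) + (0, snd ?w))" by (rule add[symmetric])
      also have "(fst ?w, 0) + (0, snd ?w) = ?w" by simp
      also have "?N ?w = z" using row_inv(3)[OF l(5)] by simp
      finally have e: "z = ?N (0, snd ?w) + ?N (fst ?w, 0)" by (simp add: add.commute)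
      have "?N (0, snd ?w) \<in> rk a b" using row_inv(1)[OF l(5)] by (simp add: rk_def)
      moreover have "?N (fst ?w, 0) \<in> rk c d" using row_inv(2)[OF l(5)] by (simp add: rk_def)
      ultimately have "z \<in> Msum (rk a b) (rk c d)" using e MsumI by metis }
    thus ?thesis by blast
  qed
  have "lcompl (psm sm) (pk p) (pk q)" using pk I S rk_sub l by (simp add: lcompl_def)
  thus "p \<in> PL \<and> q \<in> PL \<and> lcompl (psm sm) (pk p) (pk q)" using PLs by blast
next
  assume a: "p \<in> PL \<and> q \<in> PL \<and> lcompl (psm sm) (pk p) (pk q)"
  obtain a b c1 d1 where p: "p = cyc R a b" "admissible R a b" "lin a" "lin b" using a PL_E by metis
  obtain c d c2 d2 where q: "q = cyc R c d" "admissible R c d" "lin c" "lin d" using a PL_E by metis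
  have C: "lcompl (psm sm) (rk a b) (rk c d)" using a p q pk_cyc by simp
  have "bij (mm a b c d)"
    using bij_of_compl[OF p(3,4) q(3,4) _ _ C] adm_surj[OF p(2)] adm_surj[OF q(2)] by blast
  hence "mat2_invertible R a b c d" using MI2 p q by blast
  thus "distant R p q" unfolding distant_def using p q by blast
qed

end



context endo begin

lemma pk_PL: assumes "p \<in> PL" shows "lsub (psm sm) (pk p)"
proof -
  obtain a b c d where "p = cyc R a b" "lin a" "lin b" using assms PL_E by metis
  thus ?thesis using pk_cyc rk_sub by simp
qed

lemma newpoint:
  assumes pPL: "p \<in> PL" and C: "lcompl (psm sm) (pk p) X"
  shows "\<exists>x\<in>PL. pk x = X"
proof -
  obtain a b c d where p: "p = cyc R a b" "admissible R a b" "lin a" "lin b" "lin c" "lin d"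
    and M: "bij (mm a b c d)" using pPL PL_E by metis
  let ?K = "rk a b"
  let ?N = "inv_into UNIV (mm a b c d)"
  have C': "lcompl (psm sm) ?K X" using C p pk_cyc by simp
  have sK: "lsub (psm sm) ?K" and sX: "lsub (psm sm) X" and KX: "?K \<inter> X = {0}" using C' by (auto simp: lcompl_def)
  define F where "F = {(k + x, k) | k x. k \<in> ?K \<and> x \<in> X}"
  have rF: "rsub (psm sm) F"
    unfolding rsub_def
  proof (intro conjI allI impI)
    have "(0 + 0, 0) \<in> F" unfolding F_def using V.lsubD(1)[OF sK] V.lsubD(1)[OF sX] by blast
    thus "(0,0) \<in> F" by simp
  next
    fix u v u' v' assume "(u,v) \<in> F" "(u',v') \<in> F"
    then obtain k x k' x' where st: "k \<in> ?K" "x \<in> X" "u = k + x" "v = k" "k' \<in> ?K" "x' \<in> X" "u' = k' + x'" "v' = k'"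
      unfolding F_def by blast
    have "k + k' \<in> ?K" using V.lsubD(2)[OF sK st(1) st(5)] .
    moreover have "x + x' \<in> X" using V.lsubD(2)[OF sX st(2) st(6)] .
    moreover have "u + u' = (k + k') + (x + x')" using st by (simp add: algebra_simps)
    ultimately show "(u + u', v + v') \<in> F" unfolding F_def using st by blast
  next
    fix t u v assume "(u,v) \<in> F"
    then obtain k x where st: "k \<in> ?K" "x \<in> X" "u = k + x" "v = k" unfolding F_def by blast
    have "psm sm t k \<in> ?K" using V.lsubD(3)[OF sK st(1)] .
    moreover have "psm sm t x \<in> X" using V.lsubD(3)[OF sX st(2)] .
    moreover have "psm sm t u = psm sm t k + psm sm t x" using st by (simp add: V.sm_add)
    ultimately show "(psm sm t u, psm sm t v) \<in> F" unfolding F_def using st by blast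
  qed
  have fF: "\<forall>y. (0,y) \<in> F \<longrightarrow> y = 0"
  proof (intro allI impI)
    fix y assume "(0,y) \<in> F"
    then obtain k x where st: "k \<in> ?K" "x \<in> X" "0 = k + x" "y = k" unfolding F_def by blast
    have "k = - x" using st(3) by (simp add: eq_neg_iff_add_eq_0)
    hence "k \<in> X" using V.lsubD(4)[OF sX st(2)] by simp
    thus "y = 0" using KX st by blast
  qed
  have tF: "\<forall>z. \<exists>y. (z,y) \<in> F"
  proof
    fix z
    obtain k x where "k \<in> ?K" "x \<in> X" "z = k + x" using V.lcompl_decomp[OF C'] by blast
    thus "\<exists>y. (z,y) \<in> F" unfolding F_def by blast
  qed
  define \<pi> where "\<pi> = V.rfun F"
  have \<pi>F: "(z, \<pi> z) \<in> F" for z using V.rfun(1)[OF rF fF tF] by (simp add: \<pi>_def)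
  have \<pi>eq: "(z, y) \<in> F \<Longrightarrow> \<pi> z = y" for z y using V.rfun(2)[OF rF fF tF] by (simp add: \<pi>_def)
  have l\<pi>: "llin (psm sm) (psm sm) \<pi>" using V.rfun(3)[OF rF fF tF] by (simp add: \<pi>_def)
  have \<pi>add: "\<pi> (z + z') = \<pi> z + \<pi> z'" for z z' using l\<pi> unfolding llin_def by blast
  have \<pi>sm: "\<pi> (psm sm t z) = psm sm t (\<pi> z)" for t z using l\<pi> unfolding llin_def by blast
  have \<pi>K: "\<pi> k = k" if "k \<in> ?K" for k
  proof -
    have "(k + 0, k) \<in> F" unfolding F_def using that V.lsubD(1)[OF sX] by blast
    hence "\<pi> (k + 0) = k" by (rule \<pi>eq)
    thus ?thesis by simp
  qed
  have \<pi>X: "\<pi> x = 0" if "x \<in> X" for x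
  proof -
    have "(0 + x, 0) \<in> F" unfolding F_def using that V.lsubD(1)[OF sK] by blast
    hence "\<pi> (0 + x) = 0" by (rule \<pi>eq)
    thus ?thesis by simp
  qed
  have \<pi>mem: "\<pi> z \<in> ?K" "z - \<pi> z \<in> X" for z
  proof -
    obtain k x where "k \<in> ?K" "x \<in> X" "z = k + x" "\<pi> z = k" using \<pi>F[of z] unfolding F_def by blast
    thus "\<pi> z \<in> ?K" "z - \<pi> z \<in> X" by simp_all
  qed
  define a' where "a' x = row c d (\<pi> (x,0))" for x
  define b' where "b' y = row c d (\<pi> (0,y))" for y
  have rowcd: "row c d (z + z') = row c d z + row c d z'" "row c d (psm sm t z) = sm t (row c d z)"
    "row c d 0 = 0" for z z' t using row_lin[OF p(5,6)] by auto
  have rowab': "row a' b' z = row c d (\<pi> z)" for z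
  proof -
    have e: "(fst z, 0) + (0, snd z) = z" by simp
    have "\<pi> z = \<pi> (fst z, 0) + \<pi> (0, snd z)" using \<pi>add[of "(fst z, 0)" "(0, snd z)"] unfolding e .
    hence "row c d (\<pi> z) = row c d (\<pi> (fst z, 0)) + row c d (\<pi> (0, snd z))" using rowcd(1) by simp
    thus ?thesis by (simp add: row_def a'_def b'_def)
  qed
  have la': "lin a'" unfolding llin_def a'_def
  proof (intro conjI allI)
    fix x y :: 'u
    have "\<pi> (x + y, 0) = \<pi> (x, 0) + \<pi> (y, 0)" using \<pi>add[of "(x,0)" "(y,0)"] by simp
    thus "row c d (\<pi> (x + y, 0)) = row c d (\<pi> (x, 0)) + row c d (\<pi> (y, 0))" using rowcd(1) by simp
  next
    fix t and x :: 'u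
    have "\<pi> (sm t x, 0) = psm sm t (\<pi> (x, 0))" using \<pi>sm[of t "(x,0)"] by simp
    thus "row c d (\<pi> (sm t x, 0)) = sm t (row c d (\<pi> (x, 0)))" using rowcd(2) by simp
  qed
  have lb': "lin b'" unfolding llin_def b'_def
  proof (intro conjI allI)
    fix x y :: 'u
    have "\<pi> (0, x + y) = \<pi> (0, x) + \<pi> (0, y)" using \<pi>add[of "(0,x)" "(0,y)"] by simp
    thus "row c d (\<pi> (0, x + y)) = row c d (\<pi> (0, x)) + row c d (\<pi> (0, y))" using rowcd(1) by simp
  next
    fix t and x :: 'u
    have "\<pi> (0, sm t x) = psm sm t (\<pi> (0, x))" using \<pi>sm[of t "(0,x)"] by simp
    thus "row c d (\<pi> (0, sm t x)) = sm t (row c d (\<pi> (0, x)))" using rowcd(2) by simp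
  qed
  have rkX: "rk a' b' = X"
  proof
    show "rk a' b' \<subseteq> X"
    proof
      fix z assume "z \<in> rk a' b'"
      hence r1: "row c d (\<pi> z) = 0" by (simp add: rk_def rowab')
      have r2: "row a b (\<pi> z) = 0" using \<pi>mem(1)[of z] by (simp add: rk_def)
      have "mm a b c d (\<pi> z) = mm a b c d 0" using r1 r2 mm_lin(3)[OF p(3-6)] by (simp add: mm_def zero_prod_def)
      hence "\<pi> z = 0" using M by (simp add: bij_is_inj inj_eq)
      thus "z \<in> X" using \<pi>mem(2)[of z] by simp
    qed
    show "X \<subseteq> rk a' b'"
    proof
      fix z assume "z \<in> X"
      thus "z \<in> rk a' b'" using \<pi>X rowcd(3) by (simp add: rk_def rowab')
    qed
  qed
  have sa': "\<forall>u. \<exists>z. row a' b' z = u"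
  proof
    fix u
    let ?k = "?N (0, u)"
    have "?k \<in> ?K" using row_inv(1)[OF M] by (simp add: rk_def)
    hence "row a' b' ?k = row c d ?k" using \<pi>K rowab' by simp
    also have "\<dots> = u" using row_inv(2)[OF M] by simp
    finally show "\<exists>z. row a' b' z = u" by blast
  qed
  have sab: "\<forall>u. \<exists>z. row a b z = u" using adm_surj[OF p(2)] by blast
  have CX: "lcompl (psm sm) (rk a' b') (rk a b)" using V.lcompl_sym[OF C'] rkX by simp
  have "bij (mm a' b' a b)" by (rule bij_of_compl[OF la' lb' p(3,4) sa' sab CX])
  hence "admissible R a' b'" using adm_iff la' lb' p(3,4) by blast
  hence "cyc R a' b' \<in> PL" unfolding proj_line_def by blast
  moreover have "pk (cyc R a' b') = X" using pk_cyc[OF la' lb'] rkX by simp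
  ultimately show ?thesis by blast
qed

lemma iso:
  assumes pPL: "p \<in> PL" and qPL: "q \<in> PL" and C: "lcompl (psm sm) Y (pk q)"
  shows "\<exists>\<chi>. llin (psm sm) (psm sm) \<chi> \<and> inj_on \<chi> Y \<and> \<chi> ` Y = pk p"
proof -
  obtain a b c d where p: "p = cyc R a b" "admissible R a b" "lin a" "lin b" "lin c" "lin d"
    and M: "bij (mm a b c d)" using pPL PL_E by metis
  obtain a2 b2 c2 d2 where q: "q = cyc R a2 b2" "admissible R a2 b2" "lin a2" "lin b2"
    using qPL PL_E by metis
  let ?N = "inv_into UNIV (mm a b c d)"
  have C': "lcompl (psm sm) Y (rk a2 b2)" using C q pk_cyc by simp
  have sY: "lsub (psm sm) Y" and YQ: "Y \<inter> rk a2 b2 = {0}" using C' by (auto simp: lcompl_def)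
  have pkp: "pk p = rk a b" using p pk_cyc by simp
  have Nadd: "?N (z + z') = ?N z + ?N z'" and Nsm: "?N (psm sm t z) = psm sm t (?N z)" for z z' t
    using inv_lin[OF M mm_lin(1)[OF p(3-6)] mm_lin(2)[OF p(3-6)]] by auto
  define \<chi> where "\<chi> z = ?N (0, row a2 b2 z)" for z
  have r2: "row a2 b2 (z + z') = row a2 b2 z + row a2 b2 z'" "row a2 b2 (psm sm t z) = sm t (row a2 b2 z)"
    "row a2 b2 (z - z') = row a2 b2 z - row a2 b2 z'" for z z' t using row_lin[OF q(3,4)] by auto
  have l\<chi>: "llin (psm sm) (psm sm) \<chi>" unfolding llin_def \<chi>_def
  proof (intro conjI allI)
    fix z z' :: "'u \<times> 'u"
    show "?N (0, row a2 b2 (z + z')) = ?N (0, row a2 b2 z) + ?N (0, row a2 b2 z')"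
      using Nadd[of "(0, row a2 b2 z)" "(0, row a2 b2 z')"] r2(1) by simp
  next
    fix t and z :: "'u \<times> 'u"
    show "?N (0, row a2 b2 (psm sm t z)) = psm sm t (?N (0, row a2 b2 z))"
      using Nsm[of t "(0, row a2 b2 z)"] r2(2) by simp
  qed
  have MN: "mm a b c d (?N w) = w" for w using M by (simp add: bij_is_surj surj_f_inv_f)
  have inj: "inj_on \<chi> Y"
  proof (rule inj_onI)
    fix y y' assume yY: "y \<in> Y" "y' \<in> Y" and e: "\<chi> y = \<chi> y'"
    hence "mm a b c d (\<chi> y) = mm a b c d (\<chi> y')" by simp
    hence "row a2 b2 y = row a2 b2 y'" unfolding \<chi>_def MN by simp
    hence "y - y' \<in> rk a2 b2" using r2(3) by (simp add: rk_def)
    moreover have "y - y' \<in> Y" using V.lsubD(5)[OF sY yY] .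
    ultimately have "y - y' = 0" using YQ by blast
    thus "y = y'" by simp
  qed
  have img: "\<chi> ` Y = pk p"
  proof
    show "\<chi> ` Y \<subseteq> pk p"
    proof
      fix z assume "z \<in> \<chi> ` Y"
      then obtain y where "z = \<chi> y" by blast
      thus "z \<in> pk p" using row_inv(1)[OF M] by (simp add: pkp rk_def \<chi>_def)
    qed
    show "pk p \<subseteq> \<chi> ` Y"
    proof
      fix z assume "z \<in> pk p"
      hence z0: "row a b z = 0" by (simp add: pkp rk_def)
      let ?u = "row c d z"
      obtain w where w: "row a2 b2 w = ?u" using adm_surj[OF q(2)] by blast
      obtain y k where yk: "y \<in> Y" "k \<in> rk a2 b2" "w = y + k" using V.lcompl_decomp[OF C'] by blast
      have "row a2 b2 y = ?u" using w yk r2(1) by (simp add: rk_def)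
      hence "\<chi> y = ?N (mm a b c d z)" using z0 by (simp add: \<chi>_def mm_def)
      also have "\<dots> = z" using row_inv(3)[OF M] .
      finally show "z \<in> \<chi> ` Y" using yk(1) by force
    qed
  qed
  show ?thesis using l\<chi> inj img by blast
qed

lemma upper:
  assumes pPL: "p \<in> PL" and qPL: "q \<in> PL"
  shows "dpath R p q 3"
proof -
  have isoY: "\<forall>Y. lcompl (psm sm) Y (pk q) \<longrightarrow> (\<exists>\<chi>. llin (psm sm) (psm sm) \<chi> \<and> inj_on \<chi> Y \<and> \<chi> ` Y = pk p)"
    using iso[OF pPL qPL] by blast
  have isoX: "\<forall>X. lcompl (psm sm) X (pk p) \<longrightarrow> (\<exists>\<chi>. llin (psm sm) (psm sm) \<chi> \<and> inj_on \<chi> X \<and> \<chi> ` X = pk q)"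
    using iso[OF qPL pPL] by blast
  obtain X Y where XY: "lcompl (psm sm) X (pk p)" "lcompl (psm sm) Y (pk q)" "lcompl (psm sm) X Y"
    using V.three_step[OF pk_PL[OF pPL] pk_PL[OF qPL] isoY isoX] by blast
  obtain x where x: "x \<in> PL" "pk x = X" using newpoint[OF pPL V.lcompl_sym[OF XY(1)]] by blast
  obtain y where y: "y \<in> PL" "pk y = Y" using newpoint[OF qPL V.lcompl_sym[OF XY(2)]] by blast
  have d1: "distant R p x" using distant_iff pPL x V.lcompl_sym[OF XY(1)] by simp
  have d2: "distant R x y" using distant_iff x y XY(3) by simp
  have d3: "distant R y q" using distant_iff qPL y XY(2) by simp
  let ?xs = "[p, x, y, q]"
  have "\<forall>i<3. distant R (?xs ! i) (?xs ! Suc i)"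
  proof (intro allI impI)
    fix i :: nat assume "i < 3"
    hence "i = 0 \<or> i = 1 \<or> i = 2" by arith
    thus "distant R (?xs ! i) (?xs ! Suc i)" using d1 d2 d3 by auto
  qed
  moreover have "set ?xs \<subseteq> PL" using pPL qPL x y by simp
  ultimately show ?thesis unfolding dpath_def
    by (intro exI[of _ ?xs]) (simp add: numeral_3_eq_3)
qed

end



context endo begin

lemma lower:
  assumes nfd: "\<not> finite_dimensional_vs sm"
  shows "\<exists>p0 q0. p0 \<in> PL \<and> q0 \<in> PL \<and> (\<forall>m<3. \<not> dpath R p0 q0 m)"
proof -
  obtain \<sigma> a n where l\<sigma>: "lin \<sigma>" and la: "lin a" and a\<sigma>: "\<forall>u. a (\<sigma> u) = u" and an: "a n = 0" and n0: "n \<noteq> 0"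
    using shift_exists[OF nfd] by blast
  let ?z = "\<lambda>_::'u. 0::'u"
  have lz: "lin ?z" by (simp add: llin_def)
  have lid: "lin id" by (simp add: llin_def)
  have "mm id ?z ?z id = id" by (auto simp: mm_def row_def)
  hence "bij (mm id ?z ?z id)" by simp
  hence adp: "admissible R id ?z" using adm_iff lid lz by blast
  define g where "g w = (snd w - \<sigma> (a (snd w) - fst w), a (snd w) - fst w)" for w :: "'u \<times> 'u"
  have fg: "mm a ?z id \<sigma> \<circ> g = id"
  proof
    fix w :: "'u \<times> 'u"
    obtain u v where w: "w = (u,v)" by (cases w)
    have "a (v - \<sigma> (a v - u)) = u" using linD(5)[OF la] a\<sigma> by simp
    thus "(mm a ?z id \<sigma> \<circ> g) w = id w" by (simp add: w g_def mm_def row_def)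
  qed
  have gf: "g \<circ> mm a ?z id \<sigma> = id"
  proof
    fix w :: "'u \<times> 'u"
    obtain x y where w: "w = (x,y)" by (cases w)
    have "a (x + \<sigma> y) - a x = y" using linD(1)[OF la] a\<sigma> by simp
    thus "(g \<circ> mm a ?z id \<sigma>) w = id w" by (simp add: w g_def mm_def row_def)
  qed
  have "bij (mm a ?z id \<sigma>)" by (rule o_bij[OF gf fg])
  hence adq: "admissible R a ?z" using adm_iff la lz lid l\<sigma> by blast
  define p0 where "p0 = cyc R id ?z"
  define q0 where "q0 = cyc R a ?z"
  have PL: "p0 \<in> PL" "q0 \<in> PL" unfolding proj_line_def p0_def q0_def using adp adq by blast+
  have P0: "pk p0 = {z. fst z = 0}" using pk_cyc[OF lid lz] by (auto simp: p0_def rk_def row_def)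
  have Q0: "pk q0 = {z. a (fst z) = 0}" using pk_cyc[OF la lz] by (auto simp: q0_def rk_def row_def)
  have PQ: "pk p0 \<subseteq> pk q0" using P0 Q0 linD(3)[OF la] by auto
  have n1: "(n, 0) \<in> pk q0" "(n, 0) \<notin> pk p0" using P0 Q0 an n0 by auto
  have n2: "(0, n) \<in> pk p0" "(0, n) \<noteq> 0" using P0 n0 by (auto simp: zero_prod_def)
  have sQ: "lsub (psm sm) (pk q0)" using pk_PL[OF PL(2)] .
  have "\<not> dpath R p0 q0 m" if "m < 3" for m
  proof
    assume "dpath R p0 q0 m"
    then obtain xs where xs: "length xs = Suc m" "xs ! 0 = p0" "xs ! m = q0" "set xs \<subseteq> PL"
      "\<forall>i<m. distant R (xs ! i) (xs ! Suc i)" unfolding dpath_def by blast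
    have "m = 0 \<or> m = 1 \<or> m = 2" using that by arith
    moreover
    { assume "m = 0"
      hence "p0 = q0" using xs by simp
      hence False using n1 by simp }
    moreover
    { assume m1: "m = 1"
      hence "distant R p0 q0" using xs by fastforce
      hence "pk p0 \<inter> pk q0 = {0}" using distant_iff by (simp add: lcompl_def)
      hence False using n2 PQ by blast }
    moreover
    { assume m2: "m = 2"
      let ?x = "xs ! 1"
      have "distant R p0 ?x" "distant R ?x q0" using xs m2 by (fastforce simp: numeral_2_eq_2)+
      hence C1: "lcompl (psm sm) (pk p0) (pk ?x)" and C2: "lcompl (psm sm) (pk ?x) (pk q0)"
        using distant_iff by auto
      obtain p' x' where px: "p' \<in> pk p0" "x' \<in> pk ?x" "(n, 0) = p' + x'" using V.lcompl_decomp[OF C1] by blast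
      have "x' = (n, 0) - p'" using px(3) by (simp add: algebra_simps)
      hence "x' \<in> pk q0" using V.lsubD(5)[OF sQ n1(1)] PQ px(1) by blast
      hence "x' = 0" using C2 px(2) by (auto simp: lcompl_def)
      hence "(n, 0) \<in> pk p0" using px by simp
      hence False using n1 by blast }
    ultimately show False by blast
  qed
  thus ?thesis using PL by blast
qed

end

theorem mainTheorem8:
  fixes sm :: "'k::division_ring \<Rightarrow> 'u::ab_group_add \<Rightarrow> 'u"
  assumes "left_vector_space sm"
    and "\<not> finite_dimensional_vs sm"
  shows "proj_connected (End_ring sm) \<and> proj_diameter (End_ring sm) = 3"
proof -
  have "lvs sm" using assms(1) unfolding left_vector_space_def lvs_def by blast
  then interpret endo sm unfolding endo_def .
  have conn: "proj_connected R" unfolding proj_connected_def using upper by blast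
  have le: "proj_distance R p q \<le> 3" if "p \<in> PL" "q \<in> PL" for p q
  proof -
    have d: "dpath R p q 3" using upper that by blast
    hence "proj_distance R p q = enat (LEAST n. dpath R p q n)" unfolding proj_distance_def by auto
    also have "\<dots> \<le> enat 3" using Least_le[of "dpath R p q" 3] d by simp
    finally show ?thesis by (simp add: numeral_eq_enat)
  qed
  obtain p0 q0 where pq: "p0 \<in> PL" "q0 \<in> PL" "\<forall>m<3. \<not> dpath R p0 q0 m"
    using lower[OF assms(2)] by blast
  have eq: "proj_distance R p0 q0 = 3"
  proof -
    have d: "dpath R p0 q0 3" using upper pq by blast
    have "(LEAST n. dpath R p0 q0 n) = 3"
    proof (rule Least_equality)
      show "dpath R p0 q0 3" by (rule d)
      fix y assume "dpath R p0 q0 y"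
      thus "3 \<le> y" using pq(3) by (meson not_le)
    qed
    thus ?thesis using d unfolding proj_distance_def by (auto simp: numeral_eq_enat)
  qed
  have "proj_diameter R \<le> 3" unfolding proj_diameter_def
    by (intro SUP_least) (rule le)
  moreover have "3 \<le> proj_diameter R"
  proof -
    have "proj_distance R p0 q0 \<le> (SUP q\<in>PL. proj_distance R p0 q)" by (rule SUP_upper[OF pq(2)])
    also have "\<dots> \<le> (SUP p\<in>PL. SUP q\<in>PL. proj_distance R p q)" by (rule SUP_upper[OF pq(1)])
    finally show ?thesis unfolding proj_diameter_def eq .
  qed
  ultimately show ?thesis using conn by simp
qed


end
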